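(* Let $m\ge2$, $R>0$, $B=B(R)\subset\mathbb{R}^m$ the ball of radius $R$ centered at the origin, and $h\in C^2([0,\infty))$ with $h'(r)\ge0$ and $h''(r)\ge0$ on $(0,\infty)$. Assume $\alpha\in[-\sigma_1(B;\gamma_h),0]$. Let $g:[0,R]\to[0,\infty)$, not identically zero, solve $$g''+\Big(\frac{m-1}{r}+h'(r)\Big)g'+\Big(\lambda_{2,\alpha}(B;\gamma_h)-\frac{m-1}{r^2}\Big)g=0\ \text{ on }(0,R),\quad g(0)=0,\ g'(R)=-\alpha g(R),$$ and extend $g$ by $g(r)=g(R)e^{-\alpha(r-R)}$ for $r\ge R$. Define $$F(r)=g'(r)^2+\frac{m-1}{r^2}g(r)^2+2\alpha g(r)g'(r)+\alpha\Big(\frac{m-1}{r}+h'(r)\Big)g(r)^2 .$$ Then $F$ is monotonically decreasing on $(0,\infty)$.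
   Context: $d\gamma_h=e^{h(|x|)}dx$. $\lambda_{2,\alpha}(B;\gamma_h)$ is the second eigenvalue (with multiplicity) of the Robin problem $-\operatorname{div}(e^{h(|x|)}\nabla u)=\lambda e^{h(|x|)}u$ in $B$, $\partial u/\partial\nu+\alpha u=0$ on $\partial B$, given variationally by $\inf\{\frac{\int_B|\nabla u|^2d\gamma_h+\alpha\int_{\partial B}u^2e^{h}dA}{\int_Bu^2d\gamma_h}: u\ne0,\ \int_B uu_1d\gamma_h=0\}$, $u_1$ a first eigenfunction. $\sigma_1(B;\gamma_h)=\inf\{\frac{\int_B|\nabla u|^2d\gamma_h}{\int_{\partial B}u^2e^hdA}: u\ne0,\ \int_{\partial B}ue^hdA=0\}$ is the first nonzero weighted Steklov eigenvalue. *)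

theory Defs
  imports "HOL-Analysis.Analysis"
begin

definition C1_cball :: "real \<Rightarrow> ('a::euclidean_space \<Rightarrow> real) \<Rightarrow> bool" where
  "C1_cball R u \<longleftrightarrow> (\<exists>S. open S \<and> cball 0 R \<subseteq> S \<and> (\<forall>x\<in>S. u differentiable (at x)) \<and>
      (\<forall>b\<in>Basis. continuous_on S (\<lambda>x. frechet_derivative u (at x) b)))"

definition grad_sq :: "('a::euclidean_space \<Rightarrow> real) \<Rightarrow> 'a \<Rightarrow> real" where
  "grad_sq u x = (\<Sum>b\<in>Basis. (frechet_derivative u (at x) b)^2)"

text \<open>Integral over the sphere of radius R with respect to surface measure dA, expressed through
  the cone formula: the surface integral over the sphere of radius R equals
  DIM * R^(DIM-1) * integral over the unit ball of f(R x/|x|).\<close>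
definition sphere_integral :: "real \<Rightarrow> ('a::euclidean_space \<Rightarrow> real) \<Rightarrow> real" where
  "sphere_integral R f = real DIM('a) * R ^ (DIM('a) - 1) *
      integral (ball (0::'a) 1) (\<lambda>x. f ((R / norm x) *\<^sub>R x))"

definition robin_num :: "(real \<Rightarrow> real) \<Rightarrow> real \<Rightarrow> real \<Rightarrow> ('a::euclidean_space \<Rightarrow> real) \<Rightarrow> real" where
  "robin_num h R \<alpha> u = integral (ball 0 R) (\<lambda>x. grad_sq u x * exp (h (norm x)))
      + \<alpha> * sphere_integral R (\<lambda>x. (u x)^2 * exp (h (norm x)))"

definition wL2 :: "(real \<Rightarrow> real) \<Rightarrow> real \<Rightarrow> ('a::euclidean_space \<Rightarrow> real) \<Rightarrow> ('a \<Rightarrow> real) \<Rightarrow> real" where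
  "wL2 h R u v = integral (ball 0 R) (\<lambda>x. u x * v x * exp (h (norm x)))"

definition robin_lambda1 :: "(real \<Rightarrow> real) \<Rightarrow> real \<Rightarrow> real \<Rightarrow> 'a::euclidean_space itself \<Rightarrow> real" where
  "robin_lambda1 h R \<alpha> _ = Inf {robin_num h R \<alpha> u / wL2 h R u u | u :: 'a \<Rightarrow> real.
      C1_cball R u \<and> wL2 h R u u > 0}"

definition robin_u1 :: "(real \<Rightarrow> real) \<Rightarrow> real \<Rightarrow> real \<Rightarrow> 'a::euclidean_space \<Rightarrow> real" where
  "robin_u1 h R \<alpha> = (SOME u. C1_cball R u \<and> wL2 h R u u > 0 \<and>
      robin_num h R \<alpha> u / wL2 h R u u = robin_lambda1 h R \<alpha> TYPE('a))"

definition robin_lambda2 :: "(real \<Rightarrow> real) \<Rightarrow> real \<Rightarrow> real \<Rightarrow> 'a::euclidean_space itself \<Rightarrow> real" where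
  "robin_lambda2 h R \<alpha> _ = Inf {robin_num h R \<alpha> u / wL2 h R u u | u :: 'a \<Rightarrow> real.
      C1_cball R u \<and> wL2 h R u u > 0 \<and> wL2 h R u (robin_u1 h R \<alpha>) = 0}"

definition steklov_sigma1 :: "(real \<Rightarrow> real) \<Rightarrow> real \<Rightarrow> 'a::euclidean_space itself \<Rightarrow> real" where
  "steklov_sigma1 h R _ = Inf {integral (ball 0 R) (\<lambda>x. grad_sq u x * exp (h (norm x)))
        / sphere_integral R (\<lambda>x. (u x)^2 * exp (h (norm x))) | u :: 'a \<Rightarrow> real.
      C1_cball R u \<and> sphere_integral R (\<lambda>x. (u x)^2 * exp (h (norm x))) > 0 \<and>
      sphere_integral R (\<lambda>x. u x * exp (h (norm x))) = 0}"

definition gext :: "(real \<Rightarrow> real) \<Rightarrow> real \<Rightarrow> real \<Rightarrow> real \<Rightarrow> real" where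
  "gext g R \<alpha> r = (if r \<le> R then g r else g R * exp (- \<alpha> * (r - R)))"

definition gext' :: "(real \<Rightarrow> real) \<Rightarrow> (real \<Rightarrow> real) \<Rightarrow> real \<Rightarrow> real \<Rightarrow> real \<Rightarrow> real" where
  "gext' g g' R \<alpha> r = (if r \<le> R then g' r else - \<alpha> * g R * exp (- \<alpha> * (r - R)))"

end

theory Submission
  imports Defs
begin

lemma ball_const_integral:
  assumes "t \<ge> 0"
  shows "integral (ball (0::'a::euclidean_space) t) (\<lambda>x. 1::real) = unit_ball_vol (real DIM('a)) * t ^ DIM('a)"
proof -
  have "integral (ball (0::'a) t) (\<lambda>x. 1::real) = measure lebesgue (ball (0::'a) t)"
    using lmeasure_integral[of "ball (0::'a) t"] by simp
  also have "\<dots> = measure lborel (ball (0::'a) t)"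
    by simp
  also have "\<dots> = unit_ball_vol (real DIM('a)) * t ^ DIM('a)"
    by (rule content_ball[OF assms])
  finally show ?thesis .
qed

lemma radial_integrable:
  fixes c :: "real \<Rightarrow> real"
  assumes c: "continuous_on {0..R} c" and A: "A \<subseteq> ball (0::'a::euclidean_space) R" "A \<in> lmeasurable"
  shows "(\<lambda>x::'a. c (norm x)) integrable_on A"
proof -
  have cc: "continuous_on (cball (0::'a) R) (\<lambda>x. c (norm x))"
    by (rule continuous_on_compose2[OF c]) (auto intro: continuous_intros)
  then obtain B where B: "\<And>x. x \<in> cball (0::'a) R \<Longrightarrow> norm (c (norm x)) \<le> B"
    using compact_cball compact_continuous_image compact_imp_bounded
    by (metis bounded_iff imageI)
  show ?thesis
  proof (rule measurable_bounded_by_integrable_imp_integrable[where g="\<lambda>_. B"])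
    show "(\<lambda>x::'a. c (norm x)) \<in> borel_measurable (lebesgue_on A)"
      by (rule continuous_imp_measurable_on_sets_lebesgue[OF continuous_on_subset[OF cc]])
        (use A ball_subset_cball in auto)
    show "(\<lambda>_. B) integrable_on A" using A by (simp add: integrable_on_const)
    show "norm (c (norm x)) \<le> B" if "x \<in> A" for x using B that A by auto
    show "A \<in> sets lebesgue" using A by auto
  qed
qed

lemma annulus_split:
  fixes c :: "real \<Rightarrow> real"
  assumes c: "continuous_on {0..R} c" and ab: "0 \<le> a" "a \<le> b" "b \<le> R"
  shows "(\<lambda>x::'a::euclidean_space. c (norm x)) integrable_on (ball 0 b - ball 0 a)"
    and "integral (ball (0::'a) b) (\<lambda>x. c (norm x)) - integral (ball (0::'a) a) (\<lambda>x. c (norm x))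
         = integral (ball (0::'a) b - ball 0 a) (\<lambda>x. c (norm x))"
proof -
  have sub: "ball (0::'a) b \<subseteq> ball 0 R" "ball (0::'a) a \<subseteq> ball 0 R" using ab by auto
  show i1: "(\<lambda>x::'a. c (norm x)) integrable_on (ball 0 b - ball 0 a)"
    by (rule radial_integrable[OF c]) (use sub in auto)
  have i2: "(\<lambda>x::'a. c (norm x)) integrable_on (ball 0 a)"
    by (rule radial_integrable[OF c]) (use sub in auto)
  have eq: "ball (0::'a) b = ball 0 a \<union> (ball 0 b - ball 0 a)" using ab by auto
  have U: "((\<lambda>x::'a. c (norm x)) has_integral (integral (ball 0 a) (\<lambda>x::'a. c (norm x)) + integral (ball 0 b - ball 0 a) (\<lambda>x::'a. c (norm x)))) (ball 0 a \<union> (ball 0 b - ball 0 a))"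
    by (rule has_integral_Un[OF integrable_integral[OF i2] integrable_integral[OF i1]]) auto
  have "integral (ball (0::'a) b) (\<lambda>x. c (norm x)) = integral (ball 0 a) (\<lambda>x::'a. c (norm x)) + integral (ball 0 b - ball 0 a) (\<lambda>x::'a. c (norm x))"
    by (rule integral_unique) (use U eq in metis)
  then show "integral (ball (0::'a) b) (\<lambda>x. c (norm x)) - integral (ball (0::'a) a) (\<lambda>x. c (norm x))
         = integral (ball (0::'a) b - ball 0 a) (\<lambda>x. c (norm x))" by simp
qed

lemma annulus_est:
  fixes c :: "real \<Rightarrow> real"
  assumes c: "continuous_on {0..R} c" and ab: "0 \<le> a" "a \<le> b" "b \<le> R"
    and est: "\<And>r. r \<in> {a..b} \<Longrightarrow> \<bar>c r - C\<bar> \<le> e"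
  shows "\<bar>(integral (ball (0::'a::euclidean_space) b) (\<lambda>x. c (norm x)) - integral (ball (0::'a) a) (\<lambda>x. c (norm x)))
           - C * (unit_ball_vol (real DIM('a)) * b ^ DIM('a) - unit_ball_vol (real DIM('a)) * a ^ DIM('a))\<bar>
         \<le> e * (unit_ball_vol (real DIM('a)) * b ^ DIM('a) - unit_ball_vol (real DIM('a)) * a ^ DIM('a))"
proof -
  let ?A = "ball (0::'a) b - ball 0 a"
  have c1: "continuous_on {0..R} (\<lambda>_::real. 1::real)" by simp
  have i1: "(\<lambda>x::'a. c (norm x)) integrable_on ?A" and e1: "integral (ball (0::'a) b) (\<lambda>x. c (norm x)) - integral (ball (0::'a) a) (\<lambda>x. c (norm x)) = integral ?A (\<lambda>x. c (norm x))"
    using annulus_split[OF c ab] by auto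
  have i0: "(\<lambda>x::'a. 1::real) integrable_on ?A" and e0: "integral (ball (0::'a) b) (\<lambda>x. 1::real) - integral (ball (0::'a) a) (\<lambda>x. 1::real) = integral ?A (\<lambda>x. 1::real)"
    using annulus_split[OF c1 ab] by auto
  have V: "unit_ball_vol (real DIM('a)) * b ^ DIM('a) - unit_ball_vol (real DIM('a)) * a ^ DIM('a) = integral ?A (\<lambda>x. 1::real)"
    using e0 ball_const_integral[of b] ball_const_integral[of a] ab by (simp add: ball_const_integral)
  have pts: "norm x \<in> {a..b}" if "x \<in> ?A" for x using that by auto
  have bnd: "\<And>x. x \<in> ?A \<Longrightarrow> c (norm x) - C \<le> e \<and> -e \<le> c (norm x) - C"
    using est pts by (fastforce simp: abs_le_iff)
  have Am: "?A \<in> lmeasurable" by (intro fmeasurable_Diff) auto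
  have "integral ?A (\<lambda>x. c (norm x) - C) \<le> integral ?A (\<lambda>x. e * 1)"
    by (rule integral_le) (use i1 i0 bnd Am in \<open>auto intro!: integrable_diff integrable_cmul simp: abs_le_iff integrable_on_const\<close>)
  moreover have "integral ?A (\<lambda>x. - e * 1) \<le> integral ?A (\<lambda>x. c (norm x) - C)"
    by (rule integral_le) (use i1 i0 bnd Am in \<open>auto intro!: integrable_diff integrable_cmul simp: abs_le_iff integrable_on_const\<close>)
  moreover have "integral ?A (\<lambda>x. c (norm x) - C) = integral ?A (\<lambda>x. c (norm x)) - C * integral ?A (\<lambda>x. 1)"
  proof -
    have "integral ?A (\<lambda>x. c (norm x) - C) = integral ?A (\<lambda>x. c (norm x)) - integral ?A (\<lambda>x. C)"
      by (rule integral_diff[OF i1]) (use Am in \<open>simp add: integrable_on_const\<close>)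
    moreover have "integral ?A (\<lambda>x. C) = C * integral ?A (\<lambda>x. 1)"
      using integral_mult_right[of ?A C "\<lambda>x. 1::real"] by simp
    ultimately show ?thesis by simp
  qed
  moreover have "integral ?A (\<lambda>x. e) = e * integral ?A (\<lambda>x. 1)"
      using integral_mult_right[of ?A e "\<lambda>x. 1::real"] by simp
  ultimately show ?thesis
    unfolding e1 V by (simp add: abs_le_iff)
qed

lemma polar_radial:
  fixes c :: "real \<Rightarrow> real"
  assumes c: "continuous_on {0..R} c" and R: "0 \<le> R"
  shows "((\<lambda>x::'a::euclidean_space. c (norm x)) has_integral
          (real DIM('a) * unit_ball_vol (real DIM('a)) * integral {0..R} (\<lambda>r. c r * r ^ (DIM('a) - 1)))) (ball 0 R)"
proof -
  define m where "m = DIM('a)"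
  define w where "w = unit_ball_vol (real DIM('a))"
  define V where "V = (\<lambda>t::real. w * t ^ m)"
  define I where "I = (\<lambda>t. integral (ball (0::'a) t) (\<lambda>x. c (norm x)))"
  have deriv: "(I has_real_derivative (c t * (w * (real m * t ^ (m - 1))))) (at t within {0..R})"
    if t: "t \<in> {0..R}" for t
  proof -
    define P where "P = (\<lambda>y. I y - c t * V y)"
    define V' where "V' = w * (real m * t ^ (m - 1))"
    have Vd: "(V has_real_derivative V') (at t within {0..R})"
      unfolding V_def V'_def by (auto intro!: derivative_eq_intros)
    define K where "K = \<bar>V'\<bar> + 1"
    have K: "K > 0" unfolding K_def by simp
    have evK: "eventually (\<lambda>y. \<bar>(V y - V t) / (y - t)\<bar> < K) (at t within {0..R})"
    proof -
      have "((\<lambda>y. (V y - V t) / (y - t)) \<longlongrightarrow> V') (at t within {0..R})"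
        using Vd by (simp add: has_field_derivative_iff)
      then have "((\<lambda>y. \<bar>(V y - V t) / (y - t)\<bar>) \<longlongrightarrow> \<bar>V'\<bar>) (at t within {0..R})"
        by (rule tendsto_rabs)
      then show ?thesis by (rule order_tendstoD(2)) (simp add: K_def)
    qed
    have key: "\<exists>d>0. \<forall>y\<in>{0..R}. \<bar>y - t\<bar> < d \<longrightarrow> \<bar>P y - P t\<bar> \<le> e * \<bar>V y - V t\<bar>"
      if e: "e > 0" for e
    proof -
      obtain d where d: "d > 0" "\<And>r. r \<in> {0..R} \<Longrightarrow> dist r t < d \<Longrightarrow> dist (c r) (c t) < e"
        using c t e unfolding continuous_on_iff by metis
      have "\<bar>P y - P t\<bar> \<le> e * \<bar>V y - V t\<bar>" if y: "y \<in> {0..R}" "\<bar>y - t\<bar> < d" for y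
      proof (cases "t \<le> y")
        case True
        have "\<bar>(I y - I t) - c t * (V y - V t)\<bar> \<le> e * (V y - V t)"
          unfolding I_def V_def w_def m_def
        proof (rule annulus_est[OF c])
          show "\<bar>c r - c t\<bar> \<le> e" if "r \<in> {t..y}" for r
            using d(2)[of r] that t y True by (auto simp: dist_real_def)
        qed (use t y True in auto)
        moreover have "V t \<le> V y" unfolding V_def w_def using True t
          by (auto intro!: mult_left_mono power_mono simp: unit_ball_vol_nonneg)
        ultimately show ?thesis unfolding P_def by (simp add: algebra_simps)
      next
        case False
        have "\<bar>(I t - I y) - c t * (V t - V y)\<bar> \<le> e * (V t - V y)"
          unfolding I_def V_def w_def m_def
        proof (rule annulus_est[OF c])
          show "\<bar>c r - c t\<bar> \<le> e" if "r \<in> {y..t}" for r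
            using d(2)[of r] that t y False by (auto simp: dist_real_def)
        qed (use t y False in auto)
        moreover have "V y \<le> V t" unfolding V_def w_def using False y
          by (auto intro!: mult_left_mono power_mono simp: unit_ball_vol_nonneg)
        ultimately show ?thesis unfolding P_def by (simp add: algebra_simps abs_minus_commute)
      qed
      with d(1) show ?thesis by blast
    qed
    have P0: "((\<lambda>y. (P y - P t) / (y - t)) \<longlongrightarrow> 0) (at t within {0..R})"
    proof (rule tendstoI)
      fix e :: real assume e: "e > 0"
      obtain d where d: "d > 0" "\<And>y. y \<in> {0..R} \<Longrightarrow> \<bar>y - t\<bar> < d \<Longrightarrow> \<bar>P y - P t\<bar> \<le> (e / (2 * K)) * \<bar>V y - V t\<bar>"
        using key[of "e / (2 * K)"] e K by auto
      have "eventually (\<lambda>y. y \<in> {0..R} \<and> \<bar>y - t\<bar> < d \<and> y \<noteq> t) (at t within {0..R})"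
        unfolding eventually_at using d(1) by (auto simp: dist_real_def intro!: exI[of _ d])
      with evK show "eventually (\<lambda>y. dist ((P y - P t) / (y - t)) 0 < e) (at t within {0..R})"
      proof eventually_elim
        case (elim y)
        then have yt: "\<bar>y - t\<bar> > 0" by auto
        have "\<bar>(P y - P t) / (y - t)\<bar> = \<bar>P y - P t\<bar> / \<bar>y - t\<bar>" by (simp add: abs_divide)
        also have "\<dots> \<le> (e / (2 * K)) * \<bar>V y - V t\<bar> / \<bar>y - t\<bar>"
          by (rule divide_right_mono) (use d(2)[of y] elim in auto)
        also have "\<dots> = (e / (2 * K)) * \<bar>(V y - V t) / (y - t)\<bar>" by (simp add: abs_divide)
        also have "\<dots> \<le> (e / (2 * K)) * K"
          using elim e K by (intro mult_left_mono) auto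
        also have "\<dots> < e" using e K by (simp add: field_simps)
        finally show ?case by (simp add: dist_real_def)
      qed
    qed
    then have "(P has_real_derivative 0) (at t within {0..R})"
      by (simp add: has_field_derivative_iff)
    then have "((\<lambda>y. P y + c t * V y) has_real_derivative (0 + c t * V')) (at t within {0..R})"
      by (intro DERIV_add DERIV_cmult Vd)
    moreover have "(\<lambda>y. P y + c t * V y) = I" by (simp add: P_def fun_eq_iff)
    ultimately show ?thesis by (simp add: V'_def)
  qed
  have "((\<lambda>t. c t * (w * (real m * t ^ (m - 1)))) has_integral (I R - I 0)) {0..R}"
    by (rule fundamental_theorem_of_calculus[OF R])
      (use deriv in \<open>auto simp: has_real_derivative_iff_has_vector_derivative[symmetric]\<close>)
  moreover have "I 0 = 0" by (simp add: I_def)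
  moreover have "(\<lambda>t. c t * (w * (real m * t ^ (m - 1)))) = (\<lambda>t. (real m * w) * (c t * t ^ (m - 1)))"
    by (simp add: fun_eq_iff algebra_simps)
  ultimately have "((\<lambda>t. (real m * w) * (c t * t ^ (m - 1)))  has_integral I R) {0..R}" by simp
  then have IR: "I R = real m * w * integral {0..R} (\<lambda>r. c r * r ^ (m - 1))"
    by (metis integral_mult_right integral_unique)
  have "(\<lambda>x::'a. c (norm x)) integrable_on ball 0 R"
    by (rule radial_integrable[OF c]) auto
  then have "((\<lambda>x::'a. c (norm x)) has_integral I R) (ball 0 R)"
    unfolding I_def by (rule integrable_integral)
  then show ?thesis using IR by (simp add: m_def w_def)
qed

lemma odd_integral_zero:
  fixes f :: "'a::euclidean_space \<Rightarrow> real"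
  assumes meas: "f \<in> borel_measurable borel" and bnd: "\<And>x. \<bar>f x\<bar> \<le> B"
    and odd: "\<And>x. f (- x) = - f x"
  shows "integral (ball 0 r) f = 0"
proof -
  have [measurable]: "f \<in> borel_measurable lborel" using meas by simp
  have si: "set_integrable lborel (ball (0::'a) r) f"
    unfolding set_integrable_def
  proof (rule integrableI_bounded_set[where A="ball 0 r" and B=B])
    show "emeasure lborel (ball (0::'a) r) < \<infinity>" by (rule emeasure_lborel_ball_finite)
    show "AE x in lborel. x \<in> ball 0 r \<longrightarrow> norm (indicator (ball 0 r) x *\<^sub>R f x) \<le> B"
      using bnd by (auto simp: indicator_def)
    show "AE x in lborel. x \<notin> ball 0 r \<longrightarrow> indicator (ball 0 r) x *\<^sub>R f x = 0"
      by auto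
  qed (auto intro!: borel_measurable_times borel_measurable_indicator meas)
  define F where "F = (\<lambda>x::'a. indicator (ball (0::'a) r) x *\<^sub>R f x)"
  have [measurable]: "F \<in> borel_measurable lborel" unfolding F_def
  proof -
    have "(indicator (ball (0::'a) r) :: 'a \<Rightarrow> real) \<in> borel_measurable borel"
      by (rule borel_measurable_indicator) simp
    then show "(\<lambda>x. indicator (ball (0::'a) r) x *\<^sub>R f x) \<in> borel_measurable lborel"
      using meas by simp
  qed
  have "(\<integral>x. F x \<partial>lborel) = (\<integral>x. F x \<partial>(density (distr lborel borel (\<lambda>x. 0 + (-1::real) *\<^sub>R x)) (\<lambda>_. \<bar>-1::real\<bar>^DIM('a))))"
    using lborel_affine[of "-1::real" "0::'a"] by simp
  also have "\<dots> = (\<integral>x. F x \<partial>(distr lborel borel (\<lambda>x::'a. - x)))"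
    by (simp add: density_1)
  also have "\<dots> = (\<integral>x. F (- x) \<partial>lborel)"
    by (rule integral_distr) auto
  also have "\<dots> = (\<integral>x. - F x \<partial>lborel)"
    by (rule Bochner_Integration.integral_cong) (auto simp: F_def odd indicator_def)
  also have "\<dots> = - (\<integral>x. F x \<partial>lborel)" by simp
  finally have "(\<integral>x. F x \<partial>lborel) = 0" by simp
  then have "(LINT x:ball 0 r|lborel. f x) = 0" unfolding set_lebesgue_integral_def F_def by simp
  then show ?thesis using set_borel_integral_eq_integral(2)[OF si] by simp
qed

definition Ghat :: "(real \<Rightarrow> real) \<Rightarrow> (real \<Rightarrow> real) \<Rightarrow> real \<Rightarrow> real" where
  "Ghat G G' r = (if r = 0 then G' 0 else G r / r)"

definition tder :: "(real \<Rightarrow> real) \<Rightarrow> (real \<Rightarrow> real) \<Rightarrow> 'a::euclidean_space \<Rightarrow> 'a \<Rightarrow> 'a \<Rightarrow> real" where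
  "tder G G' b x v = (G' (norm x) - Ghat G G' (norm x)) * (x \<bullet> v) * (x \<bullet> b) / (norm x)^2
      + Ghat G G' (norm x) * (v \<bullet> b)"

lemma Ghat_cont:
  assumes Gd: "\<And>r. r \<ge> 0 \<Longrightarrow> (G has_real_derivative G' r) (at r within {0..})" and G0: "G 0 = 0"
  shows "continuous_on {0..} (Ghat G G')"
  unfolding continuous_on_eq_continuous_within
proof (intro ballI)
  fix x :: real assume x: "x \<in> {0..}"
  show "continuous (at x within {0..}) (Ghat G G')"
  proof (cases "x = 0")
    case True
    have "((\<lambda>y. (G y - G 0) / (y - 0)) \<longlongrightarrow> G' 0) (at 0 within {0..})"
      using Gd[of 0] by (simp add: has_field_derivative_iff)
    then have "((\<lambda>y. G y / y) \<longlongrightarrow> G' 0) (at 0 within {0..})" using G0 by simp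
    moreover have "eventually (\<lambda>y. G y / y = Ghat G G' y) (at 0 within {0..})"
      unfolding eventually_at by (auto simp: Ghat_def intro!: exI[of _ 1])
    ultimately have "(Ghat G G' \<longlongrightarrow> G' 0) (at 0 within {0..})" by (rule Lim_transform_eventually)
    then show ?thesis using True by (simp add: continuous_within Ghat_def)
  next
    case False
    with x have xp: "x > 0" by simp
    have "continuous (at x within {0..}) G" using Gd[of x] xp by (auto intro: DERIV_continuous)
    then have "(G \<longlongrightarrow> G x) (at x within {0..})" by (simp add: continuous_within)
    then have "((\<lambda>y. G y / y) \<longlongrightarrow> G x / x) (at x within {0..})"
      using xp by (intro tendsto_divide tendsto_ident_at) auto
    moreover have "eventually (\<lambda>y. G y / y = Ghat G G' y) (at x within {0..})"
      unfolding eventually_at using xp by (auto simp: Ghat_def dist_real_def intro!: exI[of _ x])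
    ultimately have "(Ghat G G' \<longlongrightarrow> G x / x) (at x within {0..})" by (rule Lim_transform_eventually)
    then show ?thesis using xp by (simp add: continuous_within Ghat_def)
  qed
qed

lemma Ghat_norm_cont:
  assumes Gd: "\<And>r. r \<ge> 0 \<Longrightarrow> (G has_real_derivative G' r) (at r within {0..})" and G0: "G 0 = 0"
  shows "continuous_on UNIV (\<lambda>x::'a::euclidean_space. Ghat G G' (norm x))"
  by (rule continuous_on_compose2[OF Ghat_cont[OF Gd G0]]) (auto intro: continuous_intros)

lemma tfun_deriv:
  fixes b :: "'a::euclidean_space"
  assumes b: "b \<in> Basis" and Gd: "\<And>r. r \<ge> 0 \<Longrightarrow> (G has_real_derivative G' r) (at r within {0..})" and G0: "G 0 = 0"
  shows "((\<lambda>x. Ghat G G' (norm x) * (x \<bullet> b)) has_derivative tder G G' b x) (at x)"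
proof (cases "x = 0")
  case False
  define r where "r = norm x"
  have r: "r > 0" using False by (simp add: r_def)
  have dG: "(G has_real_derivative G' r) (at r)"
  proof -
    have "(G has_real_derivative G' r) (at r within {0<..})"
      by (rule has_field_derivative_subset[OF Gd[of r]]) (use r in auto)
    then show ?thesis using r by (simp add: at_within_open[of r "{0<..}"])
  qed
  have dGh: "(Ghat G G' has_real_derivative ((G' r - Ghat G G' r) / r)) (at r)"
  proof -
    have "((\<lambda>y. G y / y) has_real_derivative ((G' r * r - G r * 1) / (r * r))) (at r)"
      using r by (intro DERIV_divide dG DERIV_ident) auto
    then have "((\<lambda>y. G y / y) has_real_derivative ((G' r - Ghat G G' r) / r)) (at r)"
      using r by (simp add: Ghat_def field_simps)
    then show ?thesis
      by (rule has_field_derivative_transform_within_open[where S="{0<..}"]) (use r in \<open>auto simp: Ghat_def\<close>)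
  qed
  have dn: "(norm has_derivative (\<lambda>h. h \<bullet> sgn x)) (at x)" by (rule has_derivative_norm[OF False])
  have dc: "((\<lambda>x. Ghat G G' (norm x)) has_derivative (\<lambda>h. (G' r - Ghat G G' r) / r * (h \<bullet> sgn x))) (at x)"
    using has_derivative_compose[OF dn dGh[unfolded has_field_derivative_def r_def]] by (simp add: r_def)
  have di: "((\<lambda>x. x \<bullet> b) has_derivative (\<lambda>h. h \<bullet> b)) (at x)"
    by (rule bounded_linear_imp_has_derivative) (rule bounded_linear_inner_left)
  have "((\<lambda>x. Ghat G G' (norm x) * (x \<bullet> b)) has_derivative
      (\<lambda>h. Ghat G G' (norm x) * (h \<bullet> b) + (G' r - Ghat G G' r) / r * (h \<bullet> sgn x) * (x \<bullet> b))) (at x)"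
    by (rule has_derivative_mult[OF dc di])
  moreover have "(\<lambda>h. Ghat G G' (norm x) * (h \<bullet> b) + (G' r - Ghat G G' r) / r * (h \<bullet> sgn x) * (x \<bullet> b)) = tder G G' b x"
    using r by (auto simp: fun_eq_iff tder_def r_def sgn_div_norm inner_commute field_simps power2_eq_square)
  ultimately show ?thesis by simp
next
  case True
  have td: "tder G G' b 0 = (\<lambda>v. G' 0 * (v \<bullet> b))" by (simp add: fun_eq_iff tder_def Ghat_def)
  have cont: "((\<lambda>y::'a. Ghat G G' (norm y)) \<longlongrightarrow> G' 0) (at 0)"
  proof -
    have "isCont (\<lambda>y::'a. Ghat G G' (norm y)) 0"
      using Ghat_norm_cont[OF Gd G0, where 'a='a] by (simp add: continuous_on_eq_continuous_at)
    then show ?thesis by (simp add: isCont_def Ghat_def)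
  qed
  have "((\<lambda>y. norm ((Ghat G G' (norm y) * (y \<bullet> b) - Ghat G G' (norm 0) * (0 \<bullet> b)) - G' 0 * ((y - 0) \<bullet> b)) / norm (y - 0)) \<longlongrightarrow> 0) (at (0::'a))"
  proof (rule Lim_null_comparison)
    show "eventually (\<lambda>y. norm (norm ((Ghat G G' (norm y) * (y \<bullet> b) - Ghat G G' (norm 0) * (0 \<bullet> b)) - G' 0 * ((y - 0) \<bullet> b)) / norm (y - 0)) \<le> \<bar>Ghat G G' (norm y) - G' 0\<bar>) (at (0::'a))"
    proof (rule always_eventually, intro allI)
      fix y :: 'a
      have "\<bar>(Ghat G G' (norm y) - G' 0) * (y \<bullet> b)\<bar> \<le> \<bar>Ghat G G' (norm y) - G' 0\<bar> * norm y"
        by (simp add: abs_mult mult_left_mono Basis_le_norm[OF b])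
      moreover have "(Ghat G G' (norm y) * (y \<bullet> b) - Ghat G G' (norm 0) * (0 \<bullet> b)) - G' 0 * ((y - 0) \<bullet> b) = (Ghat G G' (norm y) - G' 0) * (y \<bullet> b)"
        by (simp add: algebra_simps)
      ultimately show "norm (norm ((Ghat G G' (norm y) * (y \<bullet> b) - Ghat G G' (norm 0) * (0 \<bullet> b)) - G' 0 * ((y - 0) \<bullet> b)) / norm (y - 0)) \<le> \<bar>Ghat G G' (norm y) - G' 0\<bar>"
        by (cases "y = 0") (auto simp: divide_le_eq)
    qed
    show "((\<lambda>y::'a. \<bar>Ghat G G' (norm y) - G' 0\<bar>) \<longlongrightarrow> 0) (at 0)"
      using tendsto_rabs[OF tendsto_diff[OF cont tendsto_const[of "G' 0"]]] by simp
  qed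
  then show ?thesis
    unfolding True td has_derivative_iff_norm
    by (auto intro!: bounded_linear_intros)
qed

lemma tder_cont:
  fixes b b' :: "'a::euclidean_space"
  assumes b: "b \<in> Basis" "b' \<in> Basis"
    and Gd: "\<And>r. r \<ge> 0 \<Longrightarrow> (G has_real_derivative G' r) (at r within {0..})" and G0: "G 0 = 0"
    and Gc: "continuous_on {0..} G'"
  shows "continuous_on UNIV (\<lambda>x. tder G G' b x b')"
proof -
  define A where "A = (\<lambda>x::'a. G' (norm x) - Ghat G G' (norm x))"
  have cA: "continuous_on UNIV A"
  proof -
    have "continuous_on UNIV (\<lambda>x::'a. G' (norm x))"
      by (rule continuous_on_compose2[OF Gc]) (auto intro: continuous_intros)
    then show ?thesis unfolding A_def
      using Ghat_norm_cont[OF Gd G0, where 'a='a] by (intro continuous_intros)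
  qed
  have cGh: "continuous_on UNIV (\<lambda>x::'a. Ghat G G' (norm x))"
    using Ghat_norm_cont[OF Gd G0, where 'a='a] .
  have A0: "A 0 = 0" by (simp add: A_def Ghat_def)
  have eq: "(\<lambda>x. tder G G' b x b') = (\<lambda>x. A x * (x \<bullet> b') * (x \<bullet> b) / (norm x)^2 + Ghat G G' (norm x) * (b' \<bullet> b))"
    by (simp add: fun_eq_iff tder_def A_def)
  have "isCont (\<lambda>x. A x * (x \<bullet> b') * (x \<bullet> b) / (norm x)^2 + Ghat G G' (norm x) * (b' \<bullet> b)) x" for x
  proof -
    have iA: "isCont A x" for x using cA by (simp add: continuous_on_eq_continuous_at)
    have iG: "isCont (\<lambda>x::'a. Ghat G G' (norm x)) x" for x using cGh by (simp add: continuous_on_eq_continuous_at)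
    have "isCont (\<lambda>x. A x * (x \<bullet> b') * (x \<bullet> b) / (norm x)^2) x"
    proof (cases "x = 0")
      case False
      then show ?thesis using iA by (intro continuous_intros) auto
    next
      case True
      have "((\<lambda>y. A y * (y \<bullet> b') * (y \<bullet> b) / (norm y)^2) \<longlongrightarrow> 0) (at (0::'a))"
      proof (rule Lim_null_comparison)
        show "eventually (\<lambda>y. norm (A y * (y \<bullet> b') * (y \<bullet> b) / (norm y)^2) \<le> \<bar>A y\<bar>) (at (0::'a))"
        proof (rule always_eventually, intro allI)
          fix y :: 'a
          have "\<bar>y \<bullet> b'\<bar> * \<bar>y \<bullet> b\<bar> \<le> norm y * norm y"
            using Basis_le_norm[OF b(1), of y] Basis_le_norm[OF b(2), of y] by (intro mult_mono) auto
          then have "\<bar>A y\<bar> * (\<bar>y \<bullet> b'\<bar> * \<bar>y \<bullet> b\<bar>) \<le> \<bar>A y\<bar> * (norm y)^2"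
            by (simp add: power2_eq_square mult_left_mono)
          then show "norm (A y * (y \<bullet> b') * (y \<bullet> b) / (norm y)^2) \<le> \<bar>A y\<bar>"
            by (cases "y = 0") (auto simp: abs_mult divide_le_eq mult.assoc)
        qed
        show "((\<lambda>y. \<bar>A y\<bar>) \<longlongrightarrow> 0) (at (0::'a))"
          using iA[of 0] A0 by (metis abs_zero isCont_def tendsto_rabs)
      qed
      then show ?thesis using True by (simp add: isCont_def)
    qed
    moreover have "isCont (\<lambda>x. Ghat G G' (norm x) * (b' \<bullet> b)) x" using iG by (intro continuous_intros)
    ultimately show ?thesis by (rule continuous_add)
  qed
  then show ?thesis unfolding eq by (simp add: continuous_on_eq_continuous_at)
qed

lemma basis_sums:
  fixes x b :: "'a::euclidean_space"
  shows "(\<Sum>b'\<in>Basis. (x \<bullet> b')^2) = (norm x)^2"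
    and "b \<in> Basis \<Longrightarrow> (\<Sum>b'\<in>Basis. (x \<bullet> b') * (b' \<bullet> b)) = x \<bullet> b"
    and "b \<in> Basis \<Longrightarrow> (\<Sum>b'\<in>Basis. (b' \<bullet> b)^2) = 1"
proof -
  show "(\<Sum>b'\<in>Basis. (x \<bullet> b')^2) = (norm x)^2"
    using power2_norm_eq_inner[of x] euclidean_inner[of x x] by (simp add: power2_eq_square)
  show "b \<in> Basis \<Longrightarrow> (\<Sum>b'\<in>Basis. (x \<bullet> b') * (b' \<bullet> b)) = x \<bullet> b"
    using euclidean_inner[of x b] by (simp add: inner_commute)
  show "b \<in> Basis \<Longrightarrow> (\<Sum>b'\<in>Basis. (b' \<bullet> b)^2) = 1"
    using euclidean_inner[of b b] by (simp add: power2_eq_square inner_commute)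
qed

lemma tder_sum:
  fixes x :: "'a::euclidean_space"
  shows "(\<Sum>b\<in>Basis. \<Sum>b'\<in>Basis. (tder G G' b x b')^2)
          = (G' (norm x))^2 + (real DIM('a) - 1) * (Ghat G G' (norm x))^2"
proof -
  define a where "a = G' (norm x)"
  define g where "g = Ghat G G' (norm x)"
  define A where "A = (a - g) / (norm x)^2"
  have inner: "(\<Sum>b'\<in>Basis. (tder G G' b x b')^2) = (A * (x \<bullet> b))^2 * (norm x)^2 + 2 * A * g * (x \<bullet> b)^2 + g^2"
    if b: "b \<in> Basis" for b
  proof -
    have pt: "(tder G G' b x b')^2 = (A * (x \<bullet> b))^2 * (x \<bullet> b')^2 + (2 * A * (x \<bullet> b) * g) * ((x \<bullet> b') * (b' \<bullet> b)) + g^2 * (b' \<bullet> b)^2" for b'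
      by (simp add: tder_def A_def a_def g_def power2_eq_square algebra_simps)
    have "(\<Sum>b'\<in>Basis. (tder G G' b x b')^2) = (A * (x \<bullet> b))^2 * (\<Sum>b'\<in>Basis. (x \<bullet> b')^2)
        + (2 * A * (x \<bullet> b) * g) * (\<Sum>b'\<in>Basis. (x \<bullet> b') * (b' \<bullet> b)) + g^2 * (\<Sum>b'\<in>Basis. (b' \<bullet> b)^2)"
      unfolding pt by (simp add: sum.distrib sum_distrib_left)
    also have "\<dots> = (A * (x \<bullet> b))^2 * (norm x)^2 + 2 * A * g * (x \<bullet> b)^2 + g^2"
      by (simp only: basis_sums(1) basis_sums(2)[OF b] basis_sums(3)[OF b]) (simp add: power2_eq_square)
    finally show ?thesis .
  qed
  have "(\<Sum>b\<in>Basis. \<Sum>b'\<in>Basis. (tder G G' b x b')^2)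
      = (\<Sum>b\<in>Basis. A^2 * (norm x)^2 * (x \<bullet> b)^2 + 2 * A * g * (x \<bullet> b)^2 + g^2)"
    by (rule sum.cong) (auto simp: inner power_mult_distrib)
  also have "\<dots> = A^2 * (norm x)^2 * (\<Sum>b\<in>Basis. (x \<bullet> b)^2) + 2 * A * g * (\<Sum>b\<in>Basis. (x \<bullet> b)^2) + real DIM('a) * g^2"
    by (simp add: sum.distrib sum_distrib_left)
  also have "\<dots> = A^2 * (norm x)^4 + 2 * A * g * (norm x)^2 + real DIM('a) * g^2"
    by (simp only: basis_sums(1)) (simp add: power2_eq_square power4_eq_xxxx)
  also have "\<dots> = a^2 + (real DIM('a) - 1) * g^2"
  proof (cases "x = 0")
    case True
    then show ?thesis by (simp add: a_def g_def Ghat_def algebra_simps)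
  next
    case False
    then show ?thesis by (simp add: A_def field_simps power2_eq_square power4_eq_xxxx)
  qed
  finally show ?thesis by (simp add: a_def g_def)
qed

lemma cont_integrable_ball:
  fixes f :: "'a::euclidean_space \<Rightarrow> real"
  assumes "continuous_on (cball 0 R) f"
  shows "f integrable_on ball 0 R"
proof -
  obtain B where B: "\<And>x. x \<in> cball (0::'a) R \<Longrightarrow> norm (f x) \<le> B"
    using compact_cball compact_continuous_image compact_imp_bounded assms
    by (metis bounded_iff imageI)
  show ?thesis
  proof (rule measurable_bounded_by_integrable_imp_integrable[where g="\<lambda>_. B"])
    show "f \<in> borel_measurable (lebesgue_on (ball 0 R))"
      by (rule continuous_imp_measurable_on_sets_lebesgue[OF continuous_on_subset[OF assms]]) auto
    show "(\<lambda>_. B) integrable_on ball 0 R" by (simp add: integrable_on_const)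
    show "norm (f x) \<le> B" if "x \<in> ball 0 R" for x using B that by auto
  qed auto
qed

lemma integral_nonneg_any:
  fixes f :: "'a::euclidean_space \<Rightarrow> real"
  assumes "\<And>x. x \<in> S \<Longrightarrow> 0 \<le> f x"
  shows "0 \<le> integral S f"
  using integral_nonneg[OF _ assms] not_integrable_integral[of f S] by (cases "f integrable_on S") auto

lemma phi_integrable:
  fixes b :: "'a::euclidean_space"
  assumes b: "b \<in> Basis"
  shows "(\<lambda>x::'a. (x \<bullet> b)^2 / (norm x)^2) integrable_on ball 0 r"
proof (rule measurable_bounded_by_integrable_imp_integrable[where g="\<lambda>_. 1"])
  show "(\<lambda>x::'a. (x \<bullet> b)^2 / (norm x)^2) \<in> borel_measurable (lebesgue_on (ball 0 r))"
    by (intro measurable_restrict_space1 measurable_completion) (simp add: sets_lborel[symmetric])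
  show "(\<lambda>_. 1::real) integrable_on ball 0 r" by (simp add: integrable_on_const)
  show "norm ((x \<bullet> b)^2 / (norm x)^2) \<le> 1" for x
  proof (cases "x = 0")
    case False
    have "(x \<bullet> b)^2 \<le> (norm x)^2" using Basis_le_norm[OF b, of x] by (metis abs_le_square_iff abs_norm_cancel)
    then show ?thesis using False by (simp add: divide_le_eq)
  qed simp
qed auto

lemma phi_sum:
  "(\<Sum>b\<in>Basis. integral (ball (0::'a::euclidean_space) 1) (\<lambda>x::'a. (x \<bullet> b)^2 / (norm x)^2))
     = unit_ball_vol (real DIM('a))"
proof -
  have "(\<Sum>b\<in>Basis. integral (ball (0::'a) 1) (\<lambda>x::'a. (x \<bullet> b)^2 / (norm x)^2))
      = integral (ball (0::'a) 1) (\<lambda>x::'a. \<Sum>b\<in>Basis. (x \<bullet> b)^2 / (norm x)^2)"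
    by (rule integral_sum[symmetric]) (auto intro: phi_integrable)
  also have "\<dots> = integral (ball (0::'a) 1) (\<lambda>x. 1::real)"
  proof (rule integral_spike[where S="{0}"])
    fix x :: 'a assume x: "x \<in> ball 0 1 - {0}"
    have "(\<Sum>b\<in>Basis. (x \<bullet> b)^2 / (norm x)^2) = (\<Sum>b\<in>Basis. (x \<bullet> b)^2) / (norm x)^2"
      by (simp add: sum_divide_distrib)
    also have "\<dots> = 1" using x basis_sums(1)[of x] by simp
    finally show "1 = (\<Sum>b\<in>Basis. (x \<bullet> b)^2 / (norm x)^2)" by simp
  qed auto
  also have "\<dots> = unit_ball_vol (real DIM('a))" using ball_const_integral[of 1] by simp
  finally show ?thesis .
qed

lemma odd_b_integral:
  fixes b :: "'a::euclidean_space"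
  assumes b: "b \<in> Basis"
  shows "integral (ball 0 1) (\<lambda>x::'a. (x \<bullet> b) / norm x) = 0"
proof (rule odd_integral_zero[where B=1])
  show "(\<lambda>x::'a. (x \<bullet> b) / norm x) \<in> borel_measurable borel" by measurable
  show "\<bar>(x \<bullet> b) / norm x\<bar> \<le> 1" for x :: 'a
    using Basis_le_norm[OF b, of x] by (cases "x = 0") (auto simp: divide_le_eq abs_divide)
  show "(- x \<bullet> b) / norm (- x) = - ((x \<bullet> b) / norm x)" for x :: 'a by simp
qed

lemma steklov_test:
  fixes G G' h :: "real \<Rightarrow> real" and R \<alpha> :: real
  assumes R: "R > 0"
    and Gd: "\<And>r. r \<ge> 0 \<Longrightarrow> (G has_real_derivative G' r) (at r within {0..})" and G0: "G 0 = 0"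
    and Gc: "continuous_on {0..} G'"
    and hc: "continuous_on {0..} h"
    and al: "- steklov_sigma1 h R TYPE('a::euclidean_space) \<le> \<alpha>"
  shows "- \<alpha> * (real DIM('a) * R ^ (DIM('a) - 1) * (G R)^2 * exp (h R) * unit_ball_vol (real DIM('a)))
     \<le> real DIM('a) * unit_ball_vol (real DIM('a)) *
        integral {0..R} (\<lambda>r. ((G' r)^2 + (real DIM('a) - 1) * (Ghat G G' r)^2) * exp (h r) * r ^ (DIM('a) - 1))"
proof -
  define m where "m = DIM('a)"
  define u where "u = (\<lambda>b (x::'a). Ghat G G' (norm x) * (x \<bullet> b))"
  define N where "N = (\<lambda>b. integral (ball (0::'a) R) (\<lambda>x. grad_sq (u b) x * exp (h (norm x))))"
  define S where "S = (\<lambda>b. sphere_integral R (\<lambda>x::'a. (u b x)^2 * exp (h (norm x))))"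
  define K where "K = (\<lambda>b. integral (ball (0::'a) 1) (\<lambda>x::'a. (x \<bullet> b)^2 / (norm x)^2))"
  define c where "c = (\<lambda>r. ((G' r)^2 + (real m - 1) * (Ghat G G' r)^2) * exp (h r))"
  have ud: "(u b has_derivative tder G G' b x) (at x)" if "b \<in> Basis" for b x
    unfolding u_def by (rule tfun_deriv[OF that Gd G0])
  have fd: "frechet_derivative (u b) (at x) = tder G G' b x" if "b \<in> Basis" for b x
    using frechet_derivative_at[OF ud[OF that, of x]] by simp
  have gs: "grad_sq (u b) x = (\<Sum>b'\<in>Basis. (tder G G' b x b')^2)" if "b \<in> Basis" for b x
    unfolding grad_sq_def fd[OF that] ..
  have C1: "C1_cball R (u b)" if b: "b \<in> Basis" for b
    unfolding C1_cball_def
  proof (intro exI[of _ UNIV] conjI)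
    show "\<forall>x\<in>UNIV. u b differentiable (at x)" using ud[OF b] unfolding differentiable_def by blast
    show "\<forall>b'\<in>Basis. continuous_on UNIV (\<lambda>x. frechet_derivative (u b) (at x) b')"
      using tder_cont[OF b _ Gd G0 Gc] fd[OF b] by simp
  qed auto
  have hn: "continuous_on UNIV (\<lambda>x::'a. h (norm x))"
    by (rule continuous_on_compose2[OF hc]) (auto intro: continuous_intros)
  have cgs: "continuous_on UNIV (\<lambda>x. grad_sq (u b) x * exp (h (norm x)))" if b: "b \<in> Basis" for b
  proof -
    have A: "continuous_on UNIV (\<lambda>x::'a. \<Sum>b'\<in>Basis. (tder G G' b x b')^2)"
      using tder_cont[OF b _ Gd G0 Gc] by (intro continuous_intros) auto
    show ?thesis unfolding gs[OF b] by (rule continuous_on_mult[OF A continuous_on_exp[OF hn]])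
  qed
  have Nint: "(\<lambda>x. grad_sq (u b) x * exp (h (norm x))) integrable_on ball 0 R" if b: "b \<in> Basis" for b
    by (rule cont_integrable_ball) (rule continuous_on_subset[OF cgs[OF b]], simp)
  have gsnn: "0 \<le> grad_sq v x" for v :: "'a \<Rightarrow> real" and x
    unfolding grad_sq_def by (intro sum_nonneg) auto
  have Nnn: "0 \<le> N b" for b
    unfolding N_def by (rule integral_nonneg_any) (simp add: gsnn)
  have Sform: "S b = real m * R^(m-1) * ((G R)^2 * exp (h R) * K b)" if b: "b \<in> Basis" for b
  proof -
    have eq: "(\<lambda>x::'a. (u b ((R / norm x) *\<^sub>R x))^2 * exp (h (norm ((R / norm x) *\<^sub>R x))))
        = (\<lambda>x. ((G R)^2 * exp (h R)) * ((x \<bullet> b)^2 / (norm x)^2))"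
    proof
      fix x :: 'a
      show "(u b ((R / norm x) *\<^sub>R x))^2 * exp (h (norm ((R / norm x) *\<^sub>R x)))
        = ((G R)^2 * exp (h R)) * ((x \<bullet> b)^2 / (norm x)^2)"
      proof (cases "x = 0")
        case True then show ?thesis by (simp add: u_def)
      next
        case False
        have n: "norm ((R / norm x) *\<^sub>R x) = R" using R False by simp
        show ?thesis using False R by (simp add: u_def n Ghat_def power2_eq_square field_simps)
      qed
    qed
    show ?thesis unfolding S_def sphere_integral_def eq integral_mult_right K_def m_def by simp
  qed
  have Knn: "0 \<le> K b" for b
    unfolding K_def by (rule integral_nonneg_any) simp
  have Snn: "0 \<le> S b" if "b \<in> Basis" for b
    using Sform[OF that] R Knn[of b] by simp
  have mean: "sphere_integral R (\<lambda>x::'a. u b x * exp (h (norm x))) = 0" if b: "b \<in> Basis" for b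
  proof -
    have eq: "(\<lambda>x::'a. u b ((R / norm x) *\<^sub>R x) * exp (h (norm ((R / norm x) *\<^sub>R x))))
        = (\<lambda>x. (G R * exp (h R)) * ((x \<bullet> b) / norm x))"
    proof
      fix x :: 'a
      show "u b ((R / norm x) *\<^sub>R x) * exp (h (norm ((R / norm x) *\<^sub>R x)))
        = (G R * exp (h R)) * ((x \<bullet> b) / norm x)"
      proof (cases "x = 0")
        case True then show ?thesis by (simp add: u_def)
      next
        case False
        have n: "norm ((R / norm x) *\<^sub>R x) = R" using R False by simp
        show ?thesis using False R by (simp add: u_def n Ghat_def field_simps)
      qed
    qed
    show ?thesis unfolding sphere_integral_def eq integral_mult_right odd_b_integral[OF b] by simp
  qed
  have key: "- \<alpha> * S b \<le> N b" if b: "b \<in> Basis" for b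
  proof (cases "S b > 0")
    case True
    have "steklov_sigma1 h R TYPE('a) \<le> N b / S b"
      unfolding steklov_sigma1_def
    proof (rule cInf_lower)
      show "N b / S b \<in> {integral (ball 0 R) (\<lambda>x. grad_sq u x * exp (h (norm x))) /
             sphere_integral R (\<lambda>x. (u x)\<^sup>2 * exp (h (norm x))) |u :: 'a \<Rightarrow> real.
             C1_cball R u \<and> 0 < sphere_integral R (\<lambda>x. (u x)\<^sup>2 * exp (h (norm x))) \<and>
             sphere_integral R (\<lambda>x. u x * exp (h (norm x))) = 0}"
        using C1[OF b] True mean[OF b] unfolding N_def S_def by blast
      show "bdd_below {integral (ball 0 R) (\<lambda>x. grad_sq u x * exp (h (norm x))) /
             sphere_integral R (\<lambda>x. (u x)\<^sup>2 * exp (h (norm x))) |u :: 'a \<Rightarrow> real.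
             C1_cball R u \<and> 0 < sphere_integral R (\<lambda>x. (u x)\<^sup>2 * exp (h (norm x))) \<and>
             sphere_integral R (\<lambda>x. u x * exp (h (norm x))) = 0}"
        by (rule bdd_belowI[of _ 0]) (auto intro!: divide_nonneg_nonneg integral_nonneg_any simp: gsnn)
    qed
    then have "steklov_sigma1 h R TYPE('a) * S b \<le> N b" using True by (simp add: le_divide_eq)
    moreover have "- \<alpha> * S b \<le> steklov_sigma1 h R TYPE('a) * S b" using al True by (intro mult_right_mono) auto
    ultimately show ?thesis by linarith
  next
    case False
    then have "S b = 0" using Snn[OF b] by simp
    then show ?thesis using Nnn[of b] by simp
  qed
  have sumS: "(\<Sum>b\<in>Basis. S b) = real m * R^(m-1) * (G R)^2 * exp (h R) * unit_ball_vol (real DIM('a))"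
  proof -
    have "(\<Sum>b\<in>Basis. S b) = (\<Sum>b\<in>Basis. real m * R^(m-1) * ((G R)^2 * exp (h R) * K b))"
      by (rule sum.cong) (auto simp: Sform)
    also have "\<dots> = real m * R^(m-1) * ((G R)^2 * exp (h R) * (\<Sum>b\<in>Basis. K b))"
      by (simp add: sum_distrib_left)
    also have "(\<Sum>b\<in>Basis. K b) = unit_ball_vol (real DIM('a))"
      unfolding K_def by (rule phi_sum)
    finally show ?thesis by simp
  qed
  have cc: "continuous_on {0..R} c"
  proof -
    have "continuous_on {0..R} G'" by (rule continuous_on_subset[OF Gc]) auto
    moreover have "continuous_on {0..R} (Ghat G G')" by (rule continuous_on_subset[OF Ghat_cont[OF Gd G0]]) auto
    moreover have "continuous_on {0..R} h" by (rule continuous_on_subset[OF hc]) auto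
    ultimately show ?thesis unfolding c_def by (intro continuous_intros)
  qed
  have sumN: "(\<Sum>b\<in>Basis. N b) = real m * unit_ball_vol (real DIM('a)) * integral {0..R} (\<lambda>r. c r * r ^ (m - 1))"
  proof -
    have "(\<Sum>b\<in>Basis. N b) = integral (ball (0::'a) R) (\<lambda>x. \<Sum>b\<in>Basis. grad_sq (u b) x * exp (h (norm x)))"
      unfolding N_def by (rule integral_sum[symmetric]) (auto intro: Nint)
    also have "\<dots> = integral (ball (0::'a) R) (\<lambda>x. c (norm x))"
    proof (rule integral_cong)
      fix x :: 'a
      have "(\<Sum>b\<in>Basis. grad_sq (u b) x * exp (h (norm x))) = (\<Sum>b\<in>Basis. \<Sum>b'\<in>Basis. (tder G G' b x b')^2) * exp (h (norm x))"
        by (simp add: gs sum_distrib_right)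
      also have "\<dots> = c (norm x)" by (simp add: tder_sum c_def m_def)
      finally show "(\<Sum>b\<in>Basis. grad_sq (u b) x * exp (h (norm x))) = c (norm x)" .
    qed
    also have "\<dots> = real m * unit_ball_vol (real DIM('a)) * integral {0..R} (\<lambda>r. c r * r ^ (m - 1))"
      using polar_radial[OF cc, where 'a='a] R unfolding m_def by (intro integral_unique) simp
    finally show ?thesis .
  qed
  have "- \<alpha> * (\<Sum>b\<in>Basis. S b) \<le> (\<Sum>b\<in>Basis. N b)"
    unfolding sum_distrib_left by (rule sum_mono) (rule key)
  then show ?thesis unfolding sumS sumN by (simp add: c_def m_def)
qed


definition FLf :: "nat \<Rightarrow> real \<Rightarrow> (real \<Rightarrow> real) \<Rightarrow> (real \<Rightarrow> real) \<Rightarrow> (real \<Rightarrow> real) \<Rightarrow> real \<Rightarrow> real" where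
  "FLf m \<alpha> h' g g' r = (g' r)^2 + (real m - 1) / r^2 * (g r)^2 + 2 * \<alpha> * g r * g' r
      + \<alpha> * ((real m - 1) / r + h' r) * (g r)^2"

context
  fixes m :: nat and R \<alpha> lam :: real and h h' h'' g g' g'' :: "real \<Rightarrow> real"
  assumes m2: "m \<ge> 2" and R: "R > 0"
    and h_d1: "\<And>r. r \<ge> 0 \<Longrightarrow> (h has_real_derivative h' r) (at r within {0..})"
    and h_d2: "\<And>r. r \<ge> 0 \<Longrightarrow> (h' has_real_derivative h'' r) (at r within {0..})"
    and h'_nonneg: "\<And>r. r > 0 \<Longrightarrow> h' r \<ge> 0"
    and h''_nonneg: "\<And>r. r > 0 \<Longrightarrow> h'' r \<ge> 0"
    and g_d1: "\<And>r. r \<in> {0..R} \<Longrightarrow> (g has_real_derivative g' r) (at r within {0..R})"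
    and g_d2: "\<And>r. r \<in> {0<..<R} \<Longrightarrow> (g' has_real_derivative g'' r) (at r)"
    and g_ode: "\<And>r. r \<in> {0<..<R} \<Longrightarrow>
       g'' r + ((real m - 1) / r + h' r) * g' r + (lam - (real m - 1) / r^2) * g r = 0"
    and g0: "g 0 = 0"
    and gR: "g' R = - \<alpha> * g R"
begin

lemma h_at: "r > 0 \<Longrightarrow> (h has_real_derivative h' r) (at r)"
proof -
  assume r: "r > 0"
  have "(h has_real_derivative h' r) (at r within {0<..})"
    by (rule has_field_derivative_subset[OF h_d1]) (use r in auto)
  then show ?thesis using r by (simp add: at_within_open[of r "{0<..}"])
qed

lemma h'_at: "r > 0 \<Longrightarrow> (h' has_real_derivative h'' r) (at r)"
proof -
  assume r: "r > 0"
  have "(h' has_real_derivative h'' r) (at r within {0<..})"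
    by (rule has_field_derivative_subset[OF h_d2]) (use r in auto)
  then show ?thesis using r by (simp add: at_within_open[of r "{0<..}"])
qed

lemma h_cont: "continuous_on {0..} h"
  unfolding continuous_on_eq_continuous_within using h_d1 by (auto intro: DERIV_continuous)

lemma h'_cont: "continuous_on {0..} h'"
  unfolding continuous_on_eq_continuous_within using h_d2 by (auto intro: DERIV_continuous)

lemma h_mono: assumes "0 \<le> x" "x \<le> y" shows "h x \<le> h y"
proof (rule DERIV_nonneg_imp_increasing_open[of x y h])
  show "\<exists>d. (h has_real_derivative d) (at z) \<and> 0 \<le> d" if "x < z" "z < y" for z
    using h_at[of z] h'_nonneg[of z] that assms by auto
  show "continuous_on {x..y} h" by (rule continuous_on_subset[OF h_cont]) (use assms in auto)
qed (use assms in auto)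

lemma h'_mono: assumes "0 \<le> x" "x \<le> y" shows "h' x \<le> h' y"
proof (rule DERIV_nonneg_imp_increasing_open[of x y h'])
  show "\<exists>d. (h' has_real_derivative d) (at z) \<and> 0 \<le> d" if "x < z" "z < y" for z
    using h'_at[of z] h''_nonneg[of z] that assms by auto
  show "continuous_on {x..y} h'" by (rule continuous_on_subset[OF h'_cont]) (use assms in auto)
qed (use assms in auto)

lemma g_at: "r \<in> {0<..<R} \<Longrightarrow> (g has_real_derivative g' r) (at r)"
  using g_d1[of r] by (simp add: at_within_Icc_at)

lemma g_cont: "continuous_on {0..R} g"
  unfolding continuous_on_eq_continuous_within using g_d1 DERIV_continuous by blast

lemma G_deriv: "r \<ge> 0 \<Longrightarrow> (gext g R \<alpha> has_real_derivative gext' g g' R \<alpha> r) (at r within {0..})"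
proof -
  assume r: "r \<ge> 0"
  define E where "E = (\<lambda>x. g R * exp (- \<alpha> * (x - R)))"
  have Ed: "(E has_real_derivative (- \<alpha> * g R * exp (- \<alpha> * (x - R)))) (at x)" for x
    unfolding E_def by (auto intro!: derivative_eq_intros)
  consider "r < R" | "r = R" | "r > R" by linarith
  then show ?thesis
  proof cases
    case 1
    have "at r within {0..R} = at r within {0..}"
      by (rule at_within_nhd[of _ "{..<R}"]) (use 1 in auto)
    then have "(g has_real_derivative g' r) (at r within {0..})" using g_d1[of r] r 1 by simp
    then have "(gext g R \<alpha> has_real_derivative g' r) (at r within {0..})"
    proof (rule has_field_derivative_transform_within[where d="R - r"])
      show "g x = gext g R \<alpha> x" if "x \<in> {0..}" "dist x r < R - r" for x
        using that by (auto simp: gext_def dist_real_def)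
    qed (use 1 r in auto)
    then show ?thesis using 1 by (simp add: gext'_def)
  next
    case 3
    have "(gext g R \<alpha> has_real_derivative (- \<alpha> * g R * exp (- \<alpha> * (r - R)))) (at r)"
      by (rule has_field_derivative_transform_within_open[OF Ed, where S="{R<..}"])
        (use 3 in \<open>auto simp: gext_def E_def\<close>)
    then show ?thesis using 3 by (auto simp: gext'_def intro: has_field_derivative_at_within)
  next
    case 2
    have left: "(gext g R \<alpha> has_real_derivative g' R) (at R within {0..R})"
      by (rule has_field_derivative_transform_within[OF g_d1[of R], where d=1]) (use R in \<open>auto simp: gext_def\<close>)
    have "(E has_real_derivative g' R) (at R within {R..})"
      using has_field_derivative_at_within[OF Ed[of R]] gR by simp
    then have right: "(gext g R \<alpha> has_real_derivative g' R) (at R within {R..})"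
      by (rule has_field_derivative_transform_within[where d=1]) (auto simp: gext_def E_def)
    have "(gext g R \<alpha> has_real_derivative g' R) (at R within ({0..R} \<union> {R..}))"
      using left right by (simp add: has_field_derivative_iff Lim_within_Un)
    moreover have "{0..R} \<union> {R..} = {0::real..}" using R by auto
    ultimately show ?thesis using 2 by (simp add: gext'_def)
  qed
qed

lemma G0: "gext g R \<alpha> 0 = 0"
  using R g0 by (simp add: gext_def)

lemma ghat_eq: "r \<in> {0..R} \<Longrightarrow> Ghat (gext g R \<alpha>) (gext' g g' R \<alpha>) r = Ghat g g' r"
  using R by (auto simp: Ghat_def gext_def gext'_def)

lemma ghat_cont: "continuous_on {0..R} (Ghat g g')"
proof -
  have "continuous_on {0..R} (Ghat (gext g R \<alpha>) (gext' g g' R \<alpha>))"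
    by (rule continuous_on_subset[OF Ghat_cont[OF G_deriv G0]]) auto
  then show ?thesis by (rule continuous_on_eq) (simp add: ghat_eq)
qed


lemma P_deriv:
  assumes r: "r \<in> {0<..<R}"
  shows "((\<lambda>r. r^(m-1) * exp (h r) * g' r) has_real_derivative
           (exp (h r) * r^(m-2) * ((real m - 1) - lam * r^2) * Ghat g g' r)) (at r)"
proof -
  have r0: "r > 0" using r by auto
  obtain k where k: "m = k + 2" using m2 by (metis add.commute le_Suc_ex)
  have dp: "((\<lambda>r. r^(m-1)) has_real_derivative real (m-1) * r^(m-1-Suc 0)) (at r)" by (rule DERIV_pow)
  have de: "((\<lambda>r. exp (h r)) has_real_derivative exp (h r) * h' r) (at r)" by (rule DERIV_fun_exp[OF h_at[OF r0]])
  have "((\<lambda>r. r^(m-1) * exp (h r) * g' r) has_real_derivative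
      (real (m-1) * r^(m-1-Suc 0) * exp (h r) + exp (h r) * h' r * r^(m-1)) * g' r + g'' r * (r^(m-1) * exp (h r))) (at r)"
    by (rule DERIV_mult[OF DERIV_mult[OF dp de] g_d2[OF r]])
  moreover have ode': "g'' r = - ((real m - 1) / r + h' r) * g' r - (lam - (real m - 1) / r^2) * g r"
    using g_ode[OF r] by (simp add: algebra_simps)
  moreover have "(real (m-1) * r^(m-1-Suc 0) * exp (h r) + exp (h r) * h' r * r^(m-1)) * g' r
      + (- ((real m - 1) / r + h' r) * g' r - (lam - (real m - 1) / r^2) * g r) * (r^(m-1) * exp (h r))
      = exp (h r) * r^(m-2) * ((real m - 1) - lam * r^2) * Ghat g g' r"
    using r0 unfolding k by (simp add: Ghat_def field_simps power2_eq_square)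
  ultimately show ?thesis by simp
qed

lemma qe_cont: "continuous_on {0..R} (\<lambda>r. exp (h r) * r^(m-2) * ((real m - 1) - lam * r^2) * Ghat g g' r)"
proof -
  have "continuous_on {0..R} h" by (rule continuous_on_subset[OF h_cont]) auto
  then show ?thesis using ghat_cont by (intro continuous_intros)
qed


lemma qe_int: "0 \<le> a \<Longrightarrow> b \<le> R \<Longrightarrow>
  (\<lambda>r. exp (h r) * r^(m-2) * ((real m - 1) - lam * r^2) * Ghat g g' r) integrable_on {a..b}"
  by (rule integrable_continuous_interval, rule continuous_on_subset[OF qe_cont]) auto

lemma P_eq_Q:
  assumes r: "r \<in> {0<..<R}"
  shows "r^(m-1) * exp (h r) * g' r = integral {0..r} (\<lambda>r. exp (h r) * r^(m-2) * ((real m - 1) - lam * r^2) * Ghat g g' r)"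
proof -
  define P where "P = (\<lambda>r. r^(m-1) * exp (h r) * g' r)"
  define qe where "qe = (\<lambda>r. exp (h r) * r^(m-2) * ((real m - 1) - lam * r^2) * Ghat g g' r)"
  define Q where "Q = (\<lambda>t. integral {0..t} qe)"
  have Pd: "(P has_real_derivative qe x) (at x)" if "x \<in> {0<..<R}" for x
    unfolding P_def qe_def by (rule P_deriv[OF that])
  have diff: "P t - P s = Q t - Q s" if st: "0 < s" "s \<le> t" "t < R" for s t
  proof -
    have "(qe has_integral (P t - P s)) {s..t}"
    proof (rule fundamental_theorem_of_calculus_interior[OF st(2)])
      show "continuous_on {s..t} P"
      proof (rule continuous_at_imp_continuous_on, intro ballI)
        fix x assume "x \<in> {s..t}"
        then have "x \<in> {0<..<R}" using st by auto
        then show "isCont P x" by (rule DERIV_isCont[OF Pd])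
      qed
      show "(P has_vector_derivative qe x) (at x)" if "x \<in> {s<..<t}" for x
        using Pd[of x] that st by (simp add: has_real_derivative_iff_has_vector_derivative)
    qed
    then have "integral {s..t} qe = P t - P s" by (rule integral_unique)
    moreover have "integral {0..s} qe + integral {s..t} qe = integral {0..t} qe"
      by (rule Henstock_Kurzweil_Integration.integral_combine) (use st qe_int in \<open>auto simp: qe_def\<close>)
    ultimately show ?thesis unfolding Q_def by linarith
  qed
  define L where "L = P r - Q r"
  have Lz: "L = P z - Q z" if "0 < z" "z \<le> r" for z
    using diff[of z r] that r unfolding L_def by auto
  obtain Bg where Bg: "\<And>x. x \<in> {0..R} \<Longrightarrow> \<bar>Ghat g g' x\<bar> \<le> Bg"
    using compact_continuous_image[OF ghat_cont compact_Icc] compact_imp_bounded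
    by (metis bounded_real imageI)
  obtain Cq where Cq: "\<And>x. x \<in> {0..R} \<Longrightarrow> \<bar>qe x\<bar> \<le> Cq"
    using compact_continuous_image[OF qe_cont compact_Icc] compact_imp_bounded unfolding qe_def[symmetric]
    by (metis bounded_real imageI)
  define K where "K = exp (h R) * \<bar>Bg\<bar> + \<bar>Cq\<bar> + 1"
  have K: "K > 0" unfolding K_def by (simp add: add_nonneg_pos)
  have bound: "\<bar>L\<bar> \<le> t * K" if t: "0 < t" "t < min r 1" for t
  proof -
    have tR: "t < R" using t r by auto
    have "\<exists>l z. 0 < z \<and> z < t \<and> DERIV g z :> l \<and> g t - g 0 = (t - 0) * l"
    proof (rule MVT)
      show "0 < t" using t by simp
      show "continuous_on {0..t} g" by (rule continuous_on_subset[OF g_cont]) (use tR in auto)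
      show "g differentiable (at x)" if "0 < x" "x < t" for x
        using g_at[of x] that tR unfolding real_differentiable_def by auto
    qed
    then obtain l z where z: "0 < z" "z < t" "DERIV g z :> l" "g t - g 0 = (t - 0) * l" by blast
    have zR: "z \<in> {0<..<R}" using z tR by auto
    have l: "l = g' z" using DERIV_unique[OF z(3) g_at[OF zR]] .
    have gz: "g' z = Ghat g g' t" using z(4) l t g0 by (simp add: Ghat_def field_simps)
    have "\<bar>P z\<bar> \<le> z * (exp (h R) * \<bar>Bg\<bar>)"
    proof -
      have "z^(m-1) \<le> z"
      proof -
        obtain k where k: "m = k + 2" using m2 by (metis add.commute le_Suc_ex)
        have "z^(m-1) = z * z^(m-2)" unfolding k by simp
        also have "\<dots> \<le> z * 1" using z t by (intro mult_left_mono power_le_one) auto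
        finally show ?thesis by simp
      qed
      moreover have "exp (h z) \<le> exp (h R)" using h_mono[of z R] zR by auto
      moreover have "\<bar>g' z\<bar> \<le> \<bar>Bg\<bar>" using gz Bg[of t] t tR by auto
      ultimately have "z^(m-1) * exp (h z) \<le> z * exp (h R)"
        by (intro mult_mono) (use z in auto)
      then have "z^(m-1) * exp (h z) * \<bar>g' z\<bar> \<le> z * exp (h R) * \<bar>Bg\<bar>"
        by (rule mult_mono) (use \<open>\<bar>g' z\<bar> \<le> \<bar>Bg\<bar>\<close> z in auto)
      then show ?thesis unfolding P_def using z by (simp add: abs_mult mult.assoc)
    qed
    moreover have "\<bar>Q z\<bar> \<le> z * \<bar>Cq\<bar>"
    proof -
      have "norm (integral {0..z} qe) \<le> integral {0..z} (\<lambda>_. \<bar>Cq\<bar>)"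
      proof (rule integral_norm_bound_integral)
        show "qe integrable_on {0..z}" using qe_int[of 0 z] zR by (simp add: qe_def)
        show "(\<lambda>_. \<bar>Cq\<bar>) integrable_on {0..z}" by (rule integrable_const_ivl)
        show "norm (qe x) \<le> \<bar>Cq\<bar>" if "x \<in> {0..z}" for x using Cq[of x] that zR by force
      qed
      then show ?thesis using z by (simp add: Q_def)
    qed
    ultimately have "\<bar>L\<bar> \<le> z * K" using Lz[of z] z t unfolding K_def by (auto simp: algebra_simps)
    also have "\<dots> \<le> t * K" using z K by (intro mult_right_mono) auto
    finally show ?thesis .
  qed
  have "L = 0"
  proof (rule ccontr)
    assume "L \<noteq> 0"
    define t where "t = min (min r 1 / 2) (\<bar>L\<bar> / (2 * K))"
    have t0: "0 < t" using r K \<open>L \<noteq> 0\<close> by (auto simp: t_def)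
    have t1: "t < min r 1" using r by (auto simp: t_def)
    have "\<bar>L\<bar> \<le> t * K" by (rule bound[OF t0 t1])
    also have "\<dots> \<le> \<bar>L\<bar> / (2 * K) * K" using K by (intro mult_right_mono) (auto simp: t_def)
    also have "\<dots> = \<bar>L\<bar> / 2" using K by simp
    finally show False using \<open>L \<noteq> 0\<close> by simp
  qed
  then show ?thesis unfolding L_def P_def Q_def qe_def by simp
qed


lemma gp_cont: "continuous_on {0..R} g'"
proof -
  define qe where "qe = (\<lambda>r. exp (h r) * r^(m-2) * ((real m - 1) - lam * r^2) * Ghat g g' r)"
  define Q where "Q = (\<lambda>t. integral {0..t} qe)"
  define p where "p = (\<lambda>x::real. x^(m-1) * exp (h x))"
  obtain k where k: "m = k + 2" using m2 by (metis add.commute le_Suc_ex)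
  have qc: "continuous_on {0..R} qe" unfolding qe_def by (rule qe_cont)
  have Qc: "continuous_on {0..R} Q" unfolding Q_def
    by (rule indefinite_integral_continuous_1) (use qe_int[of 0 R] in \<open>simp add: qe_def\<close>)
  have hc: "continuous_on {0..R} h" by (rule continuous_on_subset[OF h_cont]) auto
  have pc: "continuous_on {0..R} p" unfolding p_def using hc by (intro continuous_intros)
  have ppos: "p x > 0" if "x > 0" for x using that by (simp add: p_def)
  have geq: "g' x = Q x / p x" if "x \<in> {0<..<R}" for x
    using P_eq_Q[OF that] ppos[of x] that by (simp add: p_def Q_def qe_def field_simps)
  show ?thesis
  proof (rule continuous_on_IccI)
    show "(g' \<longlongrightarrow> g' x) (at x)" if "0 < x" "x < R" for x
      using DERIV_isCont[OF g_d2[of x]] that by (simp add: isCont_def)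
  next
    show "0 < R" by (rule R)
  next
    define D where "D = (\<lambda>x. Q x / p x)"
    have Dc: "continuous_on {R/2..R} D" unfolding D_def
    proof (rule continuous_on_divide)
      show "continuous_on {R/2..R} Q" by (rule continuous_on_subset[OF Qc]) (use R in auto)
      show "continuous_on {R/2..R} p" by (rule continuous_on_subset[OF pc]) (use R in auto)
      show "\<forall>x\<in>{R/2..R}. p x \<noteq> 0"
      proof
        fix x assume "x \<in> {R/2..R}"
        then have "x > 0" using R by auto
        then show "p x \<noteq> 0" using ppos[of x] by simp
      qed
    qed
    have geqD: "g' x = D x" if "x \<in> {0<..<R}" for x using geq[OF that] by (simp add: D_def)
    have gF: "g x = g (R/2) + integral {R/2..x} D" if x: "x \<in> {R/2..R}" for x
    proof -
      have "(D has_integral (g x - g (R/2))) {R/2..x}"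
      proof (rule fundamental_theorem_of_calculus_interior)
        show "R/2 \<le> x" using x by simp
        show "continuous_on {R/2..x} g" by (rule continuous_on_subset[OF g_cont]) (use x R in auto)
        show "(g has_vector_derivative D y) (at y)" if "y \<in> {R/2<..<x}" for y
          using g_at[of y] geqD[of y] that x R by (simp add: has_real_derivative_iff_has_vector_derivative)
      qed
      then show ?thesis by (simp add: integral_unique)
    qed
    have "((\<lambda>x. g (R/2) + integral {R/2..x} D) has_real_derivative (0 + D R)) (at R within {R/2..R})"
      by (intro DERIV_add DERIV_const integral_has_real_derivative Dc) (use R in auto)
    then have "((\<lambda>x. g (R/2) + integral {R/2..x} D) has_real_derivative D R) (at R within {R/2..R})" by simp
    then have "(g has_real_derivative D R) (at R within {R/2..R})"
    proof (rule has_field_derivative_transform_within[where d=1])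
      show "g (R/2) + integral {R/2..x} D = g x" if "x \<in> {R/2..R}" "dist x R < 1" for x
        using gF[OF that(1)] by simp
    qed (use R in auto)
    moreover have "(g has_real_derivative g' R) (at R within {R/2..R})"
      by (rule has_field_derivative_subset[OF g_d1]) (use R in auto)
    moreover have "\<not> trivial_limit (at R within {R/2..R})"
      using R by (simp add: at_within_Icc_at_left)
    ultimately have gRD: "g' R = D R"
      using vector_derivative_unique_within by (metis has_real_derivative_iff_has_vector_derivative)
    have "(D \<longlongrightarrow> D R) (at_left R)" using continuous_on_Icc_at_leftD[OF Dc] R by simp
    moreover have "eventually (\<lambda>x. D x = g' x) (at_left R)"
      using eventually_at_left_real[OF R] by eventually_elim (simp add: geqD)
    ultimately show "(g' \<longlongrightarrow> g' R) (at_left R)" using gRD by (auto intro: Lim_transform_eventually)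
  next
    define pd where "pd = (\<lambda>x. exp (h x) * x^(m-2) * ((real m - 1) + x * h' x))"
    have ev: "eventually (\<lambda>x. x \<in> {0<..<R}) (at_right 0)" using eventually_at_right_real[OF R] .
    have "((\<lambda>x. Q x / p x) \<longlongrightarrow> g' 0) (at_right 0)"
    proof (rule lhopital_right_0[where f'=qe and g'=pd])
      show "(Q \<longlongrightarrow> 0) (at_right 0)" using continuous_on_Icc_at_rightD[OF Qc R] by (simp add: Q_def)
      show "(p \<longlongrightarrow> 0) (at_right 0)" using continuous_on_Icc_at_rightD[OF pc R] k by (simp add: p_def)
      show "eventually (\<lambda>x. p x \<noteq> 0) (at_right 0)" using ev by eventually_elim (use ppos in force)
      show "eventually (\<lambda>x. pd x \<noteq> 0) (at_right 0)" using ev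
      proof eventually_elim
        case (elim x)
        have "0 \<le> x * h' x" using elim h'_nonneg[of x] by auto
        moreover have "real m - 1 \<ge> 1" using m2 by simp
        ultimately show ?case using elim by (simp add: pd_def)
      qed
      show "eventually (\<lambda>x. DERIV Q x :> qe x) (at_right 0)" using ev
      proof eventually_elim
        case (elim x)
        have "(Q has_real_derivative qe x) (at x within {0..R})"
          unfolding Q_def by (rule integral_has_real_derivative[OF qc]) (use elim in auto)
        then show ?case using elim by (simp add: at_within_Icc_at)
      qed
      show "eventually (\<lambda>x. DERIV p x :> pd x) (at_right 0)" using ev
      proof eventually_elim
        case (elim x)
        have "(p has_real_derivative (real (m-1) * x^(m-1-Suc 0) * exp (h x) + exp (h x) * h' x * x^(m-1))) (at x)"
          unfolding p_def by (rule DERIV_mult[OF DERIV_pow DERIV_fun_exp[OF h_at]]) (use elim in auto)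
        moreover have "real (m-1) * x^(m-1-Suc 0) * exp (h x) + exp (h x) * h' x * x^(m-1) = pd x"
          unfolding pd_def k by (simp add: algebra_simps)
        ultimately show ?case by simp
      qed
      define F2 where "F2 = (\<lambda>x. ((real m - 1) - lam * x^2) * Ghat g g' x / ((real m - 1) + x * h' x))"
      have "(F2 \<longlongrightarrow> ((real m - 1) - lam * 0^2) * Ghat g g' 0 / ((real m - 1) + 0 * h' 0)) (at_right 0)"
      proof -
        have t1: "(Ghat g g' \<longlongrightarrow> Ghat g g' 0) (at_right 0)" using continuous_on_Icc_at_rightD[OF ghat_cont R] .
        have "continuous_on {0..R} h'" by (rule continuous_on_subset[OF h'_cont]) auto
        then have t2: "(h' \<longlongrightarrow> h' 0) (at_right 0)" using continuous_on_Icc_at_rightD R by blast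
        have "real m - 1 + 0 * h' 0 \<noteq> 0" using m2 by simp
        then show ?thesis unfolding F2_def
          by (intro tendsto_intros t1 t2) auto
      qed
      moreover have "((real m - 1) - lam * 0^2) * Ghat g g' 0 / ((real m - 1) + 0 * h' 0) = g' 0"
        using m2 by (simp add: Ghat_def)
      moreover have "eventually (\<lambda>x. F2 x = qe x / pd x) (at_right 0)" using ev
      proof eventually_elim
        case (elim x)
        define c where "c = exp (h x) * x^(m-2)"
        have c: "c \<noteq> 0" using elim by (simp add: c_def)
        have e1: "qe x = c * (((real m - 1) - lam * x^2) * Ghat g g' x)" by (simp add: qe_def c_def algebra_simps)
        have e2: "pd x = c * ((real m - 1) + x * h' x)" by (simp add: pd_def c_def)
        show ?case unfolding e1 e2 F2_def using c by (rule mult_divide_mult_cancel_left[symmetric])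
      qed
      ultimately show "((\<lambda>x. qe x / pd x) \<longlongrightarrow> g' 0) (at_right 0)"
        by (auto intro: Lim_transform_eventually)
    qed
    moreover have "eventually (\<lambda>x. Q x / p x = g' x) (at_right 0)"
      using ev by eventually_elim (simp add: geq)
    ultimately show "(g' \<longlongrightarrow> g' 0) (at_right 0)" by (rule Lim_transform_eventually)
  qed
qed


lemma Gp_cont: "continuous_on {0..} (gext' g g' R \<alpha>)"
proof -
  have "continuous_on ({0..R} \<union> {R..}) (gext' g g' R \<alpha>)"
  proof (rule continuous_on_closed_Un)
    show "continuous_on {0..R} (gext' g g' R \<alpha>)"
      by (rule continuous_on_eq[OF gp_cont]) (simp add: gext'_def)
    have "continuous_on {R..} (\<lambda>x. - \<alpha> * g R * exp (- \<alpha> * (x - R)))"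
      by (intro continuous_intros)
    then show "continuous_on {R..} (gext' g g' R \<alpha>)"
      by (rule continuous_on_eq) (auto simp: gext'_def gR)
  qed auto
  moreover have "{0..R} \<union> {R..} = {0::real..}" using R by auto
  ultimately show ?thesis by simp
qed

lemma IBP:
  "integral {0..R} (\<lambda>r. ((g' r)^2 + (real m - 1) * (Ghat g g' r)^2) * exp (h r) * r^(m-1))
     = - \<alpha> * R^(m-1) * exp (h R) * (g R)^2 + lam * integral {0..R} (\<lambda>r. (g r)^2 * exp (h r) * r^(m-1))"
proof -
  define Z where "Z = (\<lambda>r. g r * (r^(m-1) * exp (h r) * g' r))"
  define I1 where "I1 = (\<lambda>r. ((g' r)^2 + (real m - 1) * (Ghat g g' r)^2) * exp (h r) * r^(m-1)
                            - lam * ((g r)^2 * exp (h r) * r^(m-1)))"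
  obtain k where k: "m = k + 2" using m2 by (metis add.commute le_Suc_ex)
  have hc: "continuous_on {0..R} h" by (rule continuous_on_subset[OF h_cont]) auto
  have "(I1 has_integral (Z R - Z 0)) {0..R}"
  proof (rule fundamental_theorem_of_calculus_interior)
    show "0 \<le> R" using R by simp
    show "continuous_on {0..R} Z" unfolding Z_def using g_cont gp_cont hc by (intro continuous_intros)
    show "(Z has_vector_derivative I1 x) (at x)" if x: "x \<in> {0<..<R}" for x
    proof -
      have "(Z has_real_derivative (g' x * (x^(m-1) * exp (h x) * g' x)
          + (exp (h x) * x^(m-2) * ((real m - 1) - lam * x^2) * Ghat g g' x) * g x)) (at x)"
        unfolding Z_def by (rule DERIV_mult[OF g_at[OF x] P_deriv[OF x]])
      moreover have "g' x * (x^(m-1) * exp (h x) * g' x)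
          + (exp (h x) * x^(m-2) * ((real m - 1) - lam * x^2) * Ghat g g' x) * g x = I1 x"
        using x unfolding I1_def k by (simp add: Ghat_def field_simps power2_eq_square)
      ultimately show ?thesis by (simp add: has_real_derivative_iff_has_vector_derivative)
    qed
  qed
  then have "integral {0..R} I1 = Z R - Z 0" by (rule integral_unique)
  also have "Z R - Z 0 = - \<alpha> * R^(m-1) * exp (h R) * (g R)^2"
    unfolding Z_def using g0 gR by (simp add: power2_eq_square algebra_simps)
  finally have eq1: "integral {0..R} I1 = - \<alpha> * R^(m-1) * exp (h R) * (g R)^2" .
  have i1: "(\<lambda>r. ((g' r)^2 + (real m - 1) * (Ghat g g' r)^2) * exp (h r) * r^(m-1)) integrable_on {0..R}"
    by (rule integrable_continuous_interval) (use gp_cont ghat_cont hc in \<open>intro continuous_intros\<close>)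
  have i2: "(\<lambda>r. lam * ((g r)^2 * exp (h r) * r^(m-1))) integrable_on {0..R}"
    by (rule integrable_continuous_interval) (use g_cont hc in \<open>intro continuous_intros\<close>)
  have "integral {0..R} I1 = integral {0..R} (\<lambda>r. ((g' r)^2 + (real m - 1) * (Ghat g g' r)^2) * exp (h r) * r^(m-1))
      - integral {0..R} (\<lambda>r. lam * ((g r)^2 * exp (h r) * r^(m-1)))"
    unfolding I1_def by (rule integral_diff[OF i1 i2])
  then show ?thesis using eq1 by simp
qed


lemma J_pos:
  assumes nz: "\<exists>r\<in>{0..R}. g r \<noteq> 0"
  shows "integral {0..R} (\<lambda>r. (g r)^2 * exp (h r) * r^(m-1)) > 0"
proof -
  define f where "f = (\<lambda>r. (g r)^2 * exp (h r) * r^(m-1))"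
  have hc: "continuous_on {0..R} h" by (rule continuous_on_subset[OF h_cont]) auto
  have fc: "continuous_on {0..R} f" unfolding f_def using g_cont hc by (intro continuous_intros)
  have fnn: "0 \<le> f x" if "x \<in> {0..R}" for x using that by (simp add: f_def)
  have "0 \<le> integral {0..R} f" by (rule integral_nonneg[OF integrable_continuous_interval[OF fc] fnn])
  moreover have "integral {0..R} f \<noteq> 0"
  proof
    assume i0: "integral {0..R} f = 0"
    obtain r0 where r0: "r0 \<in> {0..R}" "g r0 \<noteq> 0" using nz by blast
    have "r0 \<noteq> 0" using r0 g0 by auto
    then have "f r0 > 0" using r0 by (simp add: f_def)
    moreover have "f r0 = 0"
    proof (rule has_integral_0_cbox_imp_0[of 0 R f])
      show "continuous_on (cbox 0 R) f" using fc by simp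
      show "0 \<le> f x" if "x \<in> box 0 R" for x using fnn[of x] that by (simp add: box_real)
      show "(f has_integral 0) (cbox 0 R)"
        using integrable_integral[OF integrable_continuous_interval[OF fc]] i0 by simp
      show "box 0 R \<noteq> {}" using R by (simp add: box_real)
      show "r0 \<in> cbox 0 R" using r0 by simp
    qed
    ultimately show False by simp
  qed
  ultimately show ?thesis by (simp add: f_def)
qed

lemma lam_nonneg:
  assumes mdim: "m = DIM('a::euclidean_space)"
    and st: "- steklov_sigma1 h R TYPE('a) \<le> \<alpha>"
    and nz: "\<exists>r\<in>{0..R}. g r \<noteq> 0"
  shows "lam \<ge> 0"
proof -
  define w where "w = unit_ball_vol (real DIM('a))"
  have w: "w > 0" by (simp add: w_def)
  have ST: "- \<alpha> * (real DIM('a) * R ^ (DIM('a) - 1) * (gext g R \<alpha> R)^2 * exp (h R) * w)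
     \<le> real DIM('a) * w * integral {0..R} (\<lambda>r. ((gext' g g' R \<alpha> r)^2 + (real DIM('a) - 1) *
         (Ghat (gext g R \<alpha>) (gext' g g' R \<alpha>) r)^2) * exp (h r) * r ^ (DIM('a) - 1))"
    unfolding w_def by (rule steklov_test[OF R G_deriv G0 Gp_cont h_cont st])
  have "integral {0..R} (\<lambda>r. ((gext' g g' R \<alpha> r)^2 + (real m - 1) * (Ghat (gext g R \<alpha>) (gext' g g' R \<alpha>) r)^2) * exp (h r) * r ^ (m - 1))
      = integral {0..R} (\<lambda>r. ((g' r)^2 + (real m - 1) * (Ghat g g' r)^2) * exp (h r) * r^(m-1))"
    by (rule integral_cong) (simp add: ghat_eq gext'_def)
  also have "\<dots> = - \<alpha> * R^(m-1) * exp (h R) * (g R)^2 + lam * integral {0..R} (\<lambda>r. (g r)^2 * exp (h r) * r^(m-1))"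
    by (rule IBP)
  finally have eq: "integral {0..R} (\<lambda>r. ((gext' g g' R \<alpha> r)^2 + (real m - 1) * (Ghat (gext g R \<alpha>) (gext' g g' R \<alpha>) r)^2) * exp (h r) * r ^ (m - 1))
      = - \<alpha> * R^(m-1) * exp (h R) * (g R)^2 + lam * integral {0..R} (\<lambda>r. (g r)^2 * exp (h r) * r^(m-1))" .
  have "gext g R \<alpha> R = g R" by (simp add: gext_def)
  with ST eq have "- \<alpha> * (real m * R ^ (m - 1) * (g R)^2 * exp (h R) * w)
      \<le> real m * w * (- \<alpha> * R^(m-1) * exp (h R) * (g R)^2 + lam * integral {0..R} (\<lambda>r. (g r)^2 * exp (h r) * r^(m-1)))"
    unfolding mdim by simp
  then have "0 \<le> (real m * w) * (lam * integral {0..R} (\<lambda>r. (g r)^2 * exp (h r) * r^(m-1)))"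
    by (simp add: algebra_simps)
  moreover have "real m * w > 0" using w m2 by simp
  ultimately have "0 \<le> lam * integral {0..R} (\<lambda>r. (g r)^2 * exp (h r) * r^(m-1))"
    by (simp add: zero_le_mult_iff)
  then show ?thesis using J_pos[OF nz] by (simp add: zero_le_mult_iff)
qed

lemma alpha_bound:
  assumes mdim: "m = DIM('a::euclidean_space)"
    and st: "- steklov_sigma1 h R TYPE('a) \<le> \<alpha>"
  shows "- \<alpha> * R \<le> 1"
proof -
  define w where "w = unit_ball_vol (real DIM('a))"
  have w: "w > 0" by (simp add: w_def)
  have Gd: "(id has_real_derivative 1) (at r within {0..})" for r by (rule DERIV_ident[unfolded id_def[symmetric]])
  have ST: "- \<alpha> * (real DIM('a) * R ^ (DIM('a) - 1) * (id R)^2 * exp (h R) * w)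
     \<le> real DIM('a) * w * integral {0..R} (\<lambda>r. (((\<lambda>_. 1::real) r)^2 + (real DIM('a) - 1) *
         (Ghat id (\<lambda>_. 1) r)^2) * exp (h r) * r ^ (DIM('a) - 1))"
    unfolding w_def by (rule steklov_test[OF R Gd _ _ h_cont st]) auto
  have "integral {0..R} (\<lambda>r. (((\<lambda>_. 1::real) r)^2 + (real m - 1) * (Ghat id (\<lambda>_. 1) r)^2) * exp (h r) * r ^ (m - 1))
      = integral {0..R} (\<lambda>r. real m * (exp (h r) * r ^ (m - 1)))"
    by (rule integral_cong) (simp add: Ghat_def)
  also have "\<dots> \<le> integral {0..R} (\<lambda>r. real m * (exp (h R) * r ^ (m - 1)))"
  proof (rule integral_le)
    have "continuous_on {0..R} h" by (rule continuous_on_subset[OF h_cont]) auto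
    then show "(\<lambda>r. real m * (exp (h r) * r ^ (m - 1))) integrable_on {0..R}"
      by (intro integrable_continuous_interval continuous_intros)
    show "(\<lambda>r. real m * (exp (h R) * r ^ (m - 1))) integrable_on {0..R}"
      by (intro integrable_continuous_interval continuous_intros)
    show "real m * (exp (h x) * x ^ (m - 1)) \<le> real m * (exp (h R) * x ^ (m - 1))" if "x \<in> {0..R}" for x
      using h_mono[of x R] that by (intro mult_left_mono mult_right_mono) auto
  qed
  also have "\<dots> = exp (h R) * R^m"
  proof -
    have "((\<lambda>r. r ^ (m - 1)) has_integral (R^m / real m - 0^m / real m)) {0..R}"
    proof (rule fundamental_theorem_of_calculus)
      show "0 \<le> R" using R by simp
      show "((\<lambda>r. r^m / real m) has_vector_derivative x ^ (m - 1)) (at x within {0..R})" for x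
      proof -
        have "((\<lambda>r. r^m / real m) has_real_derivative (real m * x^(m - Suc 0) / real m)) (at x within {0..R})"
          by (rule DERIV_cdivide[OF DERIV_pow])
        then show ?thesis using m2 by (simp add: has_real_derivative_iff_has_vector_derivative)
      qed
    qed
    then have "integral {0..R} (\<lambda>r. r ^ (m - 1)) = R^m / real m" using m2 by (simp add: integral_unique)
    then show ?thesis using m2 by simp
  qed
  finally have I: "integral {0..R} (\<lambda>r. (((\<lambda>_. 1::real) r)^2 + (real m - 1) * (Ghat id (\<lambda>_. 1) r)^2) * exp (h r) * r ^ (m - 1))
      \<le> exp (h R) * R^m" .
  have A: "- \<alpha> * (real m * R ^ (m - 1) * R^2 * exp (h R) * w)
     \<le> real m * w * integral {0..R} (\<lambda>r. (((\<lambda>_. 1::real) r)^2 + (real m - 1) * (Ghat id (\<lambda>_. 1) r)^2) * exp (h r) * r ^ (m - 1))"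
    using ST unfolding mdim by simp
  have B: "real m * w * integral {0..R} (\<lambda>r. (((\<lambda>_. 1::real) r)^2 + (real m - 1) * (Ghat id (\<lambda>_. 1) r)^2) * exp (h r) * r ^ (m - 1))
      \<le> real m * w * (exp (h R) * R^m)"
    by (rule mult_left_mono[OF I]) (use w in simp)
  obtain k where k: "m = k + 2" using m2 by (metis add.commute le_Suc_ex)
  have pw: "R ^ (m - 1) * R^2 = R^m * R" unfolding k by (simp add: power2_eq_square algebra_simps)
  define C where "C = real m * w * exp (h R) * R^m"
  have "C * (- \<alpha> * R) = - \<alpha> * (real m * R ^ (m - 1) * R^2 * exp (h R) * w)"
    unfolding C_def k by (simp add: power2_eq_square algebra_simps)
  also have "\<dots> \<le> C * 1" using order.trans[OF A B] unfolding C_def by (simp add: algebra_simps)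
  finally have "C * (- \<alpha> * R) \<le> C * 1" .
  moreover have "C > 0" using w m2 R by (simp add: C_def)
  ultimately show ?thesis using mult_le_cancel_left_pos by blast
qed


lemma s_antimono:
  assumes al0: "\<alpha> \<le> 0" and aR: "- \<alpha> * R \<le> 1" and xy: "0 < x" "x \<le> y" "y < R"
  shows "(real m - 1) / y^2 + \<alpha> * (real m - 1) / y + \<alpha> * h' y - \<alpha>^2 - lam
       \<le> (real m - 1) / x^2 + \<alpha> * (real m - 1) / x + \<alpha> * h' x - \<alpha>^2 - lam"
proof -
  define a where "a = 1 / x"
  define b where "b = 1 / y"
  have ab: "b \<le> a" using xy by (simp add: a_def b_def frac_le)
  have b0: "b > 0" using xy by (simp add: b_def)
  have "- \<alpha> \<le> 1 / R" using aR R by (simp add: field_simps)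
  moreover have "1 / R \<le> a" using xy by (simp add: a_def frac_le)
  ultimately have aa: "a + b + \<alpha> \<ge> 0" using b0 by linarith
  have M: "real m - 1 \<ge> 0" using m2 by simp
  have "0 \<le> (real m - 1) * (a - b) * (a + b + \<alpha>)" using M ab aa by simp
  also have "(real m - 1) * (a - b) * (a + b + \<alpha>) = ((real m - 1) / x^2 + \<alpha> * (real m - 1) / x) - ((real m - 1) / y^2 + \<alpha> * (real m - 1) / y)"
    using xy unfolding a_def b_def by (simp add: field_simps power2_eq_square)
  finally have 1: "(real m - 1) / y^2 + \<alpha> * (real m - 1) / y \<le> (real m - 1) / x^2 + \<alpha> * (real m - 1) / x" by simp
  have "h' x \<le> h' y" using h'_mono[of x y] xy by simp
  then have 2: "\<alpha> * h' y \<le> \<alpha> * h' x" using al0 by (simp add: mult_left_mono_neg)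
  show ?thesis using 1 2 by simp
qed

lemma W_deriv:
  assumes x: "x \<in> {0<..<R}"
  shows "((\<lambda>x. exp (- \<alpha> * x) * (x^(m-1) * exp (h x) * g' x + \<alpha> * (x^(m-1) * exp (h x) * g x)))
    has_real_derivative (exp (- \<alpha> * x) * (x^(m-1) * exp (h x)) * g x *
        ((real m - 1) / x^2 + \<alpha> * (real m - 1) / x + \<alpha> * h' x - \<alpha>^2 - lam))) (at x)"
proof -
  have x0: "x > 0" using x by auto
  obtain k where k: "m = k + 2" using m2 by (metis add.commute le_Suc_ex)
  have d1: "((\<lambda>x. exp (- \<alpha> * x)) has_real_derivative exp (- \<alpha> * x) * (- \<alpha>)) (at x)"
    by (rule DERIV_fun_exp[OF DERIV_cmult_Id])
  have d3: "((\<lambda>x. x^(m-1) * exp (h x)) has_real_derivative (real (m-1) * x^(m-1-Suc 0) * exp (h x) + exp (h x) * h' x * x^(m-1))) (at x)"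
    by (rule DERIV_mult[OF DERIV_pow DERIV_fun_exp[OF h_at[OF x0]]])
  have d4: "((\<lambda>x. x^(m-1) * exp (h x) * g x) has_real_derivative
      ((real (m-1) * x^(m-1-Suc 0) * exp (h x) + exp (h x) * h' x * x^(m-1)) * g x + g' x * (x^(m-1) * exp (h x)))) (at x)"
    by (rule DERIV_mult[OF d3 g_at[OF x]])
  have d: "((\<lambda>x. exp (- \<alpha> * x) * (x^(m-1) * exp (h x) * g' x + \<alpha> * (x^(m-1) * exp (h x) * g x)))
    has_real_derivative (exp (- \<alpha> * x) * (- \<alpha>) * (x^(m-1) * exp (h x) * g' x + \<alpha> * (x^(m-1) * exp (h x) * g x))
      + (exp (h x) * x^(m-2) * ((real m - 1) - lam * x^2) * Ghat g g' x
        + \<alpha> * ((real (m-1) * x^(m-1-Suc 0) * exp (h x) + exp (h x) * h' x * x^(m-1)) * g x + g' x * (x^(m-1) * exp (h x))))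
        * exp (- \<alpha> * x))) (at x)"
    by (rule DERIV_mult[OF d1 DERIV_add[OF P_deriv[OF x] DERIV_cmult[OF d4]]])
  moreover have "exp (- \<alpha> * x) * (- \<alpha>) * (x^(m-1) * exp (h x) * g' x + \<alpha> * (x^(m-1) * exp (h x) * g x))
      + (exp (h x) * x^(m-2) * ((real m - 1) - lam * x^2) * Ghat g g' x
        + \<alpha> * ((real (m-1) * x^(m-1-Suc 0) * exp (h x) + exp (h x) * h' x * x^(m-1)) * g x + g' x * (x^(m-1) * exp (h x))))
        * exp (- \<alpha> * x)
    = exp (- \<alpha> * x) * (x^(m-1) * exp (h x)) * g x *
        ((real m - 1) / x^2 + \<alpha> * (real m - 1) / x + \<alpha> * h' x - \<alpha>^2 - lam)"
    using x0 unfolding k by (simp add: Ghat_def field_simps power2_eq_square)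
  ultimately show ?thesis by simp
qed

lemma w_nonneg:
  assumes al0: "\<alpha> \<le> 0" and aR: "- \<alpha> * R \<le> 1" and r: "r \<in> {0<..<R}"
    and g_nonneg: "\<And>r. r \<in> {0..R} \<Longrightarrow> g r \<ge> 0"
  shows "g' r + \<alpha> * g r \<ge> 0"
proof -
  define W where "W = (\<lambda>x. exp (- \<alpha> * x) * (x^(m-1) * exp (h x) * g' x + \<alpha> * (x^(m-1) * exp (h x) * g x)))"
  define s where "s = (\<lambda>x. (real m - 1) / x^2 + \<alpha> * (real m - 1) / x + \<alpha> * h' x - \<alpha>^2 - lam)"
  have hc: "continuous_on {0..R} h" by (rule continuous_on_subset[OF h_cont]) auto
  have Wc: "continuous_on {0..R} W" unfolding W_def using gp_cont g_cont hc by (intro continuous_intros)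
  have Wd: "(W has_real_derivative (exp (- \<alpha> * x) * (x^(m-1) * exp (h x)) * g x * s x)) (at x)"
    if "x \<in> {0<..<R}" for x unfolding W_def s_def by (rule W_deriv[OF that])
  obtain k where k: "m = k + 2" using m2 by (metis add.commute le_Suc_ex)
  have W0: "W 0 = 0" by (simp add: W_def k)
  have WR: "W R = 0" using gR by (simp add: W_def algebra_simps)
  have fpos: "exp (- \<alpha> * x) * (x^(m-1) * exp (h x)) > 0" if "x > 0" for x using that by simp
  have r0: "r > 0" "r < R" using r by auto
  have "W r \<ge> 0"
  proof (cases "s r \<ge> 0")
    case True
    have "W 0 \<le> W r"
    proof (rule DERIV_nonneg_imp_increasing_open[of 0 r W])
      show "0 \<le> r" using r0 by simp
      show "continuous_on {0..r} W" by (rule continuous_on_subset[OF Wc]) (use r0 in auto)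
      fix x assume x: "0 < x" "x < r"
      have "s r \<le> s x" unfolding s_def by (rule s_antimono[OF al0 aR]) (use x r0 in auto)
      then have "s x \<ge> 0" using True by simp
      moreover have "g x \<ge> 0" using g_nonneg[of x] x r0 by auto
      ultimately have "exp (- \<alpha> * x) * (x^(m-1) * exp (h x)) * g x * s x \<ge> 0"
        using fpos[of x] x by simp
      then show "\<exists>y. (W has_real_derivative y) (at x) \<and> 0 \<le> y" using Wd[of x] x r0 by auto
    qed
    then show ?thesis using W0 by simp
  next
    case False
    have "W R \<le> W r"
    proof (rule DERIV_nonpos_imp_decreasing_open[of r R W])
      show "r \<le> R" using r0 by simp
      show "continuous_on {r..R} W" by (rule continuous_on_subset[OF Wc]) (use r0 in auto)
      fix x assume x: "r < x" "x < R"
      have "s x \<le> s r" unfolding s_def by (rule s_antimono[OF al0 aR]) (use x r0 in auto)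
      then have "s x \<le> 0" using False by simp
      moreover have "g x \<ge> 0" using g_nonneg[of x] x r0 by auto
      ultimately have "exp (- \<alpha> * x) * (x^(m-1) * exp (h x)) * g x * s x \<le> 0"
        using fpos[of x] x r0 by (simp add: mult_nonneg_nonpos)
      then show "\<exists>y. (W has_real_derivative y) (at x) \<and> y \<le> 0" using Wd[of x] x r0 by auto
    qed
    then show ?thesis using WR by simp
  qed
  moreover have "W r = (exp (- \<alpha> * r) * (r^(m-1) * exp (h r))) * (g' r + \<alpha> * g r)"
    by (simp add: W_def algebra_simps)
  ultimately show ?thesis using fpos[OF r0(1)] by (simp add: zero_le_mult_iff)
qed


lemma Fl_deriv:
  assumes z: "z \<in> {0<..<R}"
  shows "((\<lambda>r. (g' r)^2 + (real m - 1) / r^2 * (g r)^2 + 2 * \<alpha> * g r * g' r + \<alpha> * ((real m - 1) / r + h' r) * (g r)^2)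
     has_real_derivative
      (- (2 * ((real m - 1) / z * (g' z - g z / z)^2)) - 2 * ((h' z - \<alpha>) * (g' z)^2) - 2 * (lam * (g z * (g' z + \<alpha> * g z)))
       + \<alpha> * (real m - 1) * (g z)^2 / z^2 + \<alpha> * h'' z * (g z)^2)) (at z)"
proof -
  have z0: "z > 0" using z by auto
  have ode': "g'' z = - ((real m - 1) / z + h' z) * g' z - (lam - (real m - 1) / z^2) * g z"
    using g_ode[OF z] by (simp add: algebra_simps)
  have dA: "((\<lambda>r. (g' r)^2) has_real_derivative of_nat 2 * (g'' z * (g' z)^(2 - Suc 0))) (at z)"
    by (rule DERIV_power[OF g_d2[OF z]])
  have dr2: "((\<lambda>r. r^2) has_real_derivative of_nat 2 * (1 * z^(2 - Suc 0))) (at z)"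
    by (rule DERIV_power[OF DERIV_ident])
  have dq: "((\<lambda>r. (real m - 1) / r^2) has_real_derivative (0 * z^2 - (real m - 1) * (of_nat 2 * (1 * z^(2 - Suc 0)))) / (z^2 * z^2)) (at z)"
    by (rule DERIV_divide[OF DERIV_const dr2]) (use z0 in simp)
  have dg2: "((\<lambda>r. (g r)^2) has_real_derivative of_nat 2 * (g' z * (g z)^(2 - Suc 0))) (at z)"
    by (rule DERIV_power[OF g_at[OF z]])
  have dB: "((\<lambda>r. (real m - 1) / r^2 * (g r)^2) has_real_derivative
     (0 * z^2 - (real m - 1) * (of_nat 2 * (1 * z^(2 - Suc 0)))) / (z^2 * z^2) * (g z)^2 + of_nat 2 * (g' z * (g z)^(2 - Suc 0)) * ((real m - 1) / z^2)) (at z)"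
    by (rule DERIV_mult[OF dq dg2])
  have dC: "((\<lambda>r. 2 * \<alpha> * g r * g' r) has_real_derivative (2 * \<alpha> * g' z) * g' z + g'' z * (2 * \<alpha> * g z)) (at z)"
    by (rule DERIV_mult[OF DERIV_cmult[OF g_at[OF z]] g_d2[OF z]])
  have d1r: "((\<lambda>r. (real m - 1) / r) has_real_derivative (0 * z - (real m - 1) * 1) / (z * z)) (at z)"
    by (rule DERIV_divide[OF DERIV_const DERIV_ident]) (use z0 in simp)
  have dD: "((\<lambda>r. \<alpha> * ((real m - 1) / r + h' r) * (g r)^2) has_real_derivative
      (\<alpha> * ((0 * z - (real m - 1) * 1) / (z * z) + h'' z)) * (g z)^2 + of_nat 2 * (g' z * (g z)^(2 - Suc 0)) * (\<alpha> * ((real m - 1) / z + h' z))) (at z)"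
    by (rule DERIV_mult[OF DERIV_cmult[OF DERIV_add[OF d1r h'_at[OF z0]]] dg2])
  have D: "((\<lambda>r. (g' r)^2 + (real m - 1) / r^2 * (g r)^2 + 2 * \<alpha> * g r * g' r + \<alpha> * ((real m - 1) / r + h' r) * (g r)^2)
     has_real_derivative
      (of_nat 2 * (g'' z * (g' z)^(2 - Suc 0)) +
       ((0 * z^2 - (real m - 1) * (of_nat 2 * (1 * z^(2 - Suc 0)))) / (z^2 * z^2) * (g z)^2 + of_nat 2 * (g' z * (g z)^(2 - Suc 0)) * ((real m - 1) / z^2)) +
       ((2 * \<alpha> * g' z) * g' z + g'' z * (2 * \<alpha> * g z)) +
       ((\<alpha> * ((0 * z - (real m - 1) * 1) / (z * z) + h'' z)) * (g z)^2 + of_nat 2 * (g' z * (g z)^(2 - Suc 0)) * (\<alpha> * ((real m - 1) / z + h' z))))) (at z)"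
    by (rule DERIV_add[OF DERIV_add[OF DERIV_add[OF dA dB] dC] dD])
  show ?thesis
    by (rule DERIV_cong[OF D]) (use z0 in \<open>simp add: ode' field_simps power2_eq_square power3_eq_cube\<close>)
qed


lemma Fl_mono:
  assumes lam0: "lam \<ge> 0" and al0: "\<alpha> \<le> 0" and aR: "- \<alpha> * R \<le> 1"
    and g_nonneg: "\<And>r. r \<in> {0..R} \<Longrightarrow> g r \<ge> 0"
    and xy: "0 < x" "x \<le> y" "y \<le> R"
  shows "FLf m \<alpha> h' g g' y \<le> FLf m \<alpha> h' g g' x"
proof (rule DERIV_nonpos_imp_decreasing_open[of x y "FLf m \<alpha> h' g g'"])
  show "x \<le> y" using xy by simp
  have c1: "continuous_on {x..y} g" by (rule continuous_on_subset[OF g_cont]) (use xy in auto)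
  have c2: "continuous_on {x..y} g'" by (rule continuous_on_subset[OF gp_cont]) (use xy in auto)
  have c3: "continuous_on {x..y} h'" by (rule continuous_on_subset[OF h'_cont]) (use xy in auto)
  show "continuous_on {x..y} (FLf m \<alpha> h' g g')"
    unfolding FLf_def[abs_def] using c1 c2 c3 xy by (intro continuous_intros) auto
  fix t assume t: "x < t" "t < y"
  have tR: "t \<in> {0<..<R}" using t xy by auto
  have eqF: "FLf m \<alpha> h' g g' = (\<lambda>r. (g' r)^2 + (real m - 1) / r^2 * (g r)^2 + 2 * \<alpha> * g r * g' r + \<alpha> * ((real m - 1) / r + h' r) * (g r)^2)"
    by (simp add: fun_eq_iff FLf_def)
  have t0: "t > 0" using tR by simp
  have M: "real m - 1 \<ge> 0" using m2 by simp
  have "0 \<le> (real m - 1) / t * (g' t - g t / t)^2" using M t0 by (intro mult_nonneg_nonneg divide_nonneg_pos) auto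
  moreover have "0 \<le> (h' t - \<alpha>) * (g' t)^2" using h'_nonneg[OF t0] al0 by (intro mult_nonneg_nonneg) auto
  moreover have "0 \<le> lam * (g t * (g' t + \<alpha> * g t))"
  proof -
    have "g t \<ge> 0" using g_nonneg[of t] tR by auto
    moreover have "g' t + \<alpha> * g t \<ge> 0" by (rule w_nonneg[OF al0 aR tR g_nonneg])
    ultimately show ?thesis using lam0 by (intro mult_nonneg_nonneg) auto
  qed
  moreover have "\<alpha> * (real m - 1) * (g t)^2 / t^2 \<le> 0" using al0 M t0
    by (simp add: divide_nonpos_pos mult_nonpos_nonneg)
  moreover have "\<alpha> * h'' t * (g t)^2 \<le> 0" using al0 h''_nonneg[OF t0]
    by (simp add: mult_nonpos_nonneg)
  ultimately have "- (2 * ((real m - 1) / t * (g' t - g t / t)^2)) - 2 * ((h' t - \<alpha>) * (g' t)^2) - 2 * (lam * (g t * (g' t + \<alpha> * g t)))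
       + \<alpha> * (real m - 1) * (g t)^2 / t^2 + \<alpha> * h'' t * (g t)^2 \<le> 0" by linarith
  then show "\<exists>d. (FLf m \<alpha> h' g g' has_real_derivative d) (at t) \<and> d \<le> 0"
    using Fl_deriv[OF tR] unfolding eqF by blast
qed

lemma Fr_mono:
  assumes al0: "\<alpha> \<le> 0" and xy: "R \<le> x" "x \<le> y"
  shows "FLf m \<alpha> h' (gext g R \<alpha>) (gext' g g' R \<alpha>) y \<le> FLf m \<alpha> h' (gext g R \<alpha>) (gext' g g' R \<alpha>) x"
proof -
  define E where "E = (\<lambda>r. g R * exp (- \<alpha> * (r - R)))"
  define B where "B = (\<lambda>r. - (\<alpha> * \<alpha>) + (real m - 1) / r^2 + \<alpha> * ((real m - 1) / r) + \<alpha> * h' r)"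
  define Fr where "Fr = (\<lambda>r. (E r)^2 * B r)"
  have eq: "FLf m \<alpha> h' (gext g R \<alpha>) (gext' g g' R \<alpha>) r = Fr r" if r: "R \<le> r" for r
  proof (cases "r \<le> R")
    case True
    then have "r = R" using r by simp
    then show ?thesis using gR by (simp add: FLf_def gext_def gext'_def Fr_def E_def B_def power2_eq_square field_simps)
  next
    case False
    then show ?thesis by (simp add: FLf_def gext_def gext'_def Fr_def E_def B_def power2_eq_square field_simps)
  qed
  have M: "real m - 1 \<ge> 0" using m2 by simp
  have "Fr y \<le> Fr x"
  proof (rule DERIV_nonpos_imp_decreasing_open[of x y Fr])
    show "x \<le> y" using xy by simp
    have c3: "continuous_on {x..y} h'" by (rule continuous_on_subset[OF h'_cont]) (use xy R in auto)
    show "continuous_on {x..y} Fr"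
      unfolding Fr_def E_def B_def using c3 xy R by (intro continuous_intros) auto
    fix t assume t: "x < t" "t < y"
    have t0: "t > 0" using t xy R by simp
    define a where "a = - \<alpha>"
    have a0: "a \<ge> 0" using al0 by (simp add: a_def)
    have dE: "(E has_real_derivative (g R * (exp (- \<alpha> * (t - R)) * (- \<alpha> * (1 - 0))))) (at t)"
      unfolding E_def by (intro DERIV_cmult DERIV_fun_exp DERIV_cmult DERIV_diff DERIV_ident DERIV_const)
    have dE2: "((\<lambda>r. (E r)^2) has_real_derivative of_nat 2 * ((g R * (exp (- \<alpha> * (t - R)) * (- \<alpha> * (1 - 0)))) * (E t)^(2 - Suc 0))) (at t)"
      by (rule DERIV_power[OF dE])
    have dr2: "((\<lambda>r. r^2) has_real_derivative of_nat 2 * (1 * t^(2 - Suc 0))) (at t)"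
      by (rule DERIV_power[OF DERIV_ident])
    have dB: "(B has_real_derivative (0 + (0 * t^2 - (real m - 1) * (of_nat 2 * (1 * t^(2 - Suc 0)))) / (t^2 * t^2)
          + \<alpha> * ((0 * t - (real m - 1) * 1) / (t * t)) + \<alpha> * h'' t)) (at t)"
      unfolding B_def
      by (intro DERIV_add DERIV_const DERIV_cmult h'_at[OF t0] DERIV_divide[OF DERIV_const dr2] DERIV_divide[OF DERIV_const DERIV_ident])
        (use t0 in auto)
    have D: "(Fr has_real_derivative
        (of_nat 2 * ((g R * (exp (- \<alpha> * (t - R)) * (- \<alpha> * (1 - 0)))) * (E t)^(2 - Suc 0)) * B t
         + (0 + (0 * t^2 - (real m - 1) * (of_nat 2 * (1 * t^(2 - Suc 0)))) / (t^2 * t^2)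
          + \<alpha> * ((0 * t - (real m - 1) * 1) / (t * t)) + \<alpha> * h'' t) * (E t)^2)) (at t)"
      unfolding Fr_def by (rule DERIV_mult[OF dE2 dB])
    have val: "of_nat 2 * ((g R * (exp (- \<alpha> * (t - R)) * (- \<alpha> * (1 - 0)))) * (E t)^(2 - Suc 0)) * B t
         + (0 + (0 * t^2 - (real m - 1) * (of_nat 2 * (1 * t^(2 - Suc 0)))) / (t^2 * t^2)
          + \<alpha> * ((0 * t - (real m - 1) * 1) / (t * t)) + \<alpha> * h'' t) * (E t)^2
        = (E t)^2 * (- 2 * a^3 - 2 * a^2 * h' t - a * h'' t - (real m - 1) / t^3 * (2 * a^2 * t^2 - 3 * a * t + 2))"
      using t0 unfolding a_def B_def E_def by (simp add: field_simps power2_eq_square power3_eq_cube)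
    have q: "2 * a^2 * t^2 - 3 * a * t + 2 > 0"
    proof -
      have "2 * a^2 * t^2 - 3 * a * t + 2 = 2 * (a * t - 3/4)^2 + 7/8" by (simp add: power2_eq_square algebra_simps)
      also have "\<dots> > 0" by (simp add: add_nonneg_pos)
      finally show ?thesis .
    qed
    have "- 2 * a^3 - 2 * a^2 * h' t - a * h'' t - (real m - 1) / t^3 * (2 * a^2 * t^2 - 3 * a * t + 2) \<le> 0"
    proof -
      have "a^3 \<ge> 0" "a^2 * h' t \<ge> 0" "a * h'' t \<ge> 0" "(real m - 1) / t^3 * (2 * a^2 * t^2 - 3 * a * t + 2) \<ge> 0"
        using a0 h'_nonneg[OF t0] h''_nonneg[OF t0] M t0 q by (auto intro!: mult_nonneg_nonneg divide_nonneg_pos)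
      then show ?thesis by linarith
    qed
    then have "(E t)^2 * (- 2 * a^3 - 2 * a^2 * h' t - a * h'' t - (real m - 1) / t^3 * (2 * a^2 * t^2 - 3 * a * t + 2)) \<le> 0"
      by (simp add: mult_nonneg_nonpos)
    then show "\<exists>d. (Fr has_real_derivative d) (at t) \<and> d \<le> 0" using D val by auto
  qed
  then show ?thesis using eq[of x] eq[of y] xy by simp
qed

end

theorem lemma3p1:
  fixes R \<alpha> :: real and h h' h'' g g' g'' :: "real \<Rightarrow> real"
    and F :: "real \<Rightarrow> real"
  assumes dim: "DIM('a::euclidean_space) \<ge> 2"
    and R: "R > 0"
    and h_d1: "\<And>r. r \<ge> 0 \<Longrightarrow> (h has_real_derivative h' r) (at r within {0..})"
    and h_d2: "\<And>r. r \<ge> 0 \<Longrightarrow> (h' has_real_derivative h'' r) (at r within {0..})"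
    and h_C2: "continuous_on {0..} h''"
    and h'_nonneg: "\<And>r. r > 0 \<Longrightarrow> h' r \<ge> 0"
    and h''_nonneg: "\<And>r. r > 0 \<Longrightarrow> h'' r \<ge> 0"
    and \<alpha>: "- steklov_sigma1 h R TYPE('a) \<le> \<alpha>" "\<alpha> \<le> 0"
    and g_d1: "\<And>r. r \<in> {0..R} \<Longrightarrow> (g has_real_derivative g' r) (at r within {0..R})"
    and g_d2: "\<And>r. r \<in> {0<..<R} \<Longrightarrow> (g' has_real_derivative g'' r) (at r)"
    and g_nonneg: "\<And>r. r \<in> {0..R} \<Longrightarrow> g r \<ge> 0"
    and g_nonzero: "\<exists>r\<in>{0..R}. g r \<noteq> 0"
    and g_ode: "\<And>r. r \<in> {0<..<R} \<Longrightarrow>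
       g'' r + ((real DIM('a) - 1) / r + h' r) * g' r
         + (robin_lambda2 h R \<alpha> TYPE('a) - (real DIM('a) - 1) / r^2) * g r = 0"
    and g0: "g 0 = 0"
    and gR: "g' R = - \<alpha> * g R"
    and F_def: "\<And>r. F r = (gext' g g' R \<alpha> r)^2 + (real DIM('a) - 1) / r^2 * (gext g R \<alpha> r)^2
       + 2 * \<alpha> * gext g R \<alpha> r * gext' g g' R \<alpha> r
       + \<alpha> * ((real DIM('a) - 1) / r + h' r) * (gext g R \<alpha> r)^2"
  shows "\<forall>r s. 0 < r \<and> r \<le> s \<longrightarrow> F s \<le> F r"
proof -
  have lam0: "robin_lambda2 h R \<alpha> TYPE('a) \<ge> 0"
    by (rule lam_nonneg[OF dim R h_d1 h_d2 h'_nonneg h''_nonneg g_d1 g_d2 g_ode g0 gR refl \<alpha>(1) g_nonzero])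
  have aR: "- \<alpha> * R \<le> 1"
    by (rule alpha_bound[OF dim R h_d1 h_d2 h'_nonneg h''_nonneg g_d1 g_d2 g_ode g0 gR refl \<alpha>(1)])
  have FF: "F x = FLf DIM('a) \<alpha> h' (gext g R \<alpha>) (gext' g g' R \<alpha>) x" for x
    by (simp add: F_def FLf_def)
  have FL: "F x = FLf DIM('a) \<alpha> h' g g' x" if "x \<le> R" for x
    using that by (simp add: F_def FLf_def gext_def gext'_def)
  have left: "F y \<le> F x" if "0 < x" "x \<le> y" "y \<le> R" for x y
    using Fl_mono[OF dim R h_d1 h_d2 h'_nonneg h''_nonneg g_d1 g_d2 g_ode g0 gR lam0 \<alpha>(2) aR g_nonneg that]
      FL[of x] FL[of y] that by simp
  have right: "F y \<le> F x" if "R \<le> x" "x \<le> y" for x y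
    using Fr_mono[OF dim R h_d1 h_d2 h'_nonneg h''_nonneg g_d1 g_d2 g_ode g0 gR \<alpha>(2) that]
      FF[of x] FF[of y] by simp
  show ?thesis
  proof (intro allI impI)
    fix r s :: real assume rs: "0 < r \<and> r \<le> s"
    show "F s \<le> F r"
    proof (cases "s \<le> R")
      case True then show ?thesis using left rs by blast
    next
      case False
      show ?thesis
      proof (cases "R \<le> r")
        case True then show ?thesis using right rs by blast
      next
        case False
        then have "F R \<le> F r" using left[of r R] rs by simp
        moreover have "F s \<le> F R" using right[of R s] \<open>\<not> s \<le> R\<close> by simp
        ultimately show ?thesis by simp
      qed
    qed
  qed
qed

end
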